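(* Let $J\ge 2$ and, for every dimension $d$, let $F_1,\ldots,F_J$ be probability distributions on $\mathbb{R}^d$ (the $J$ competing classes) satisfying assumptions (A1)–(A3) stated in the context. For each $j$, let $\mathbf{X}_{j1},\ldots,\mathbf{X}_{jn_j}$ be a training sample from $F_j$ with $n_j\ge 2$ fixed (not depending on $d$), all training observations being mutually independent, and let the test observation $\mathbf{Z}$ be independent of the training data. Then: (a) If $\nu_{ji}^2>|\sigma_j^2-\sigma_i^2|$ for all $j\neq i$, the misclassification probability of the $k$-nearest neighbor classifier with $k<\min\{n_1,\ldots,n_J\}$ converges to $0$ as $d\to\infty$. However, if $\nu_{ji}^2<|\sigma_j^2-\sigma_i^2|$ for some $j\neq i$, then all observations from at least one class are misclassified by this classifier with probability tending to $1$ as $d\to\infty$. (b) If $\nu_{ji}^2>0$ for all $j\neq i$, the misclassification probability of the CH classifier converges to $0$ as $d\to\infty$. (c) If for all $j\neq i$ either $\nu_{ji}^2>0$ or $\sigma_j^2\neq\sigma_i^2$, the misclassification probability of the MCH classifier converges to $0$ as $d\to\infty$.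
   Context: "Measurement variables" are the coordinates of a random vector. Assumptions: (A1) In each of the $J$ classes, the coordinates have fourth moments bounded uniformly (over coordinates and over $d$). (A2) If $\mathbf{X}=(X_1,\ldots,X_d)^\top\sim F_j$ and $\mathbf{Y}=(Y_1,\ldots,Y_d)^\top\sim F_i$ ($1\le j,i\le J$) are independent and $\mathbf{U}=\mathbf{X}-\mathbf{Y}$, then $\sum_{r\neq s}|\mathrm{Corr}(U_r^2,U_s^2)|=o(d^2)$ as $d\to\infty$. (A3) Let $\boldsymbol{\mu}_j$ and $\boldsymbol{\Sigma}_j$ be the mean vector and dispersion matrix of $F_j$. For each $j$ there is a constant $\sigma_j^2$ with $\mathrm{trace}(\boldsymbol{\Sigma}_j)/d\to\sigma_j^2$, and for each $i\neq j$ there is a constant $\nu_{ji}^2$ with $\|\boldsymbol{\mu}_j-\boldsymbol{\mu}_i\|^2/d\to\nu_{ji}^2$, as $d\to\infty$. The $k$-nearest neighbor classifier assigns $\mathbf{Z}$ to the class having the most representatives among the $k$ training points closest to $\mathbf{Z}$ in Euclidean norm $\|\cdot\|$. The CH classifier computes $\rho_j(\mathbf{Z},\mathbf{X}_{ji})=\|\mathbf{Z}-\mathbf{X}_{ji}\|^2-\frac12\binom{n_j}{2}^{-1}\sum_{1\le s<t\le n_j}\|\mathbf{X}_{js}-\mathbf{X}_{jt}\|^2$ and assigns $\mathbf{Z}$ to the class $j_0$ with $\min_{i}\rho_{j_0}(\mathbf{Z},\mathbf{X}_{j_0i})<\min_i\rho_j(\mathbf{Z},\mathbf{X}_{ji})$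 for all $j\ne j_0$. The MCH classifier is the same with $\rho^*_j(\mathbf{Z},\mathbf{X}_{ji})=\|\mathbf{Z}-\mathbf{X}_{ji}\|-\frac12\binom{n_j}{2}^{-1}\sum_{1\le s<t\le n_j}\|\mathbf{X}_{js}-\mathbf{X}_{jt}\|$ in place of $\rho_j$. The misclassification probability converging to $0$ means that for each $j$, the probability that a test observation $\mathbf{Z}\sim F_j$ is not assigned to class $j$ tends to $0$. *)

theory Defs
  imports "HOL-Probability.Probability"
begin

definition vec_space :: "nat \<Rightarrow> (nat \<Rightarrow> real) measure" where
  "vec_space d = PiM {..<d} (\<lambda>_. borel)"

definition eucl_norm :: "nat \<Rightarrow> (nat \<Rightarrow> real) \<Rightarrow> real" where
  "eucl_norm d u = sqrt (\<Sum>r<d. (u r)^2)"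

definition eucl_dist :: "nat \<Rightarrow> (nat \<Rightarrow> real) \<Rightarrow> (nat \<Rightarrow> real) \<Rightarrow> real" where
  "eucl_dist d u v = eucl_norm d (\<lambda>r. u r - v r)"

definition mean_vec :: "(nat \<Rightarrow> real) measure \<Rightarrow> nat \<Rightarrow> real" where
  "mean_vec M r = (\<integral>x. x r \<partial>M)"

definition var_of :: "'a measure \<Rightarrow> ('a \<Rightarrow> real) \<Rightarrow> real" where
  "var_of M f = (\<integral>x. (f x - (\<integral>y. f y \<partial>M))^2 \<partial>M)"

definition cov_of :: "'a measure \<Rightarrow> ('a \<Rightarrow> real) \<Rightarrow> ('a \<Rightarrow> real) \<Rightarrow> real" where
  "cov_of M f g = (\<integral>x. (f x - (\<integral>y. f y \<partial>M)) * (g x - (\<integral>y. g y \<partial>M)) \<partial>M)"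

text \<open>Correlation; by the HOL convention x/0 = 0 it is 0 if a variance vanishes.\<close>
definition corr_of :: "'a measure \<Rightarrow> ('a \<Rightarrow> real) \<Rightarrow> ('a \<Rightarrow> real) \<Rightarrow> real" where
  "corr_of M f g = cov_of M f g / sqrt (var_of M f * var_of M g)"

definition trace_disp :: "nat \<Rightarrow> (nat \<Rightarrow> real) measure \<Rightarrow> real" where
  "trace_disp d M = (\<Sum>r<d. var_of M (\<lambda>x. x r))"

definition train_idx :: "nat \<Rightarrow> (nat \<Rightarrow> nat) \<Rightarrow> (nat \<times> nat) set" where
  "train_idx J n = {(c, i). c < J \<and> i < n c}"

definition train_test ::
  "nat \<Rightarrow> (nat \<Rightarrow> nat) \<Rightarrow> (nat \<Rightarrow> (nat \<Rightarrow> real) measure) \<Rightarrow> nat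
    \<Rightarrow> ((nat \<times> nat \<Rightarrow> nat \<Rightarrow> real) \<times> (nat \<Rightarrow> real)) measure" where
  "train_test J n F j = (PiM (train_idx J n) (\<lambda>p. F (fst p))) \<Otimes>\<^sub>M F j"

definition knn_set :: "nat \<Rightarrow> nat \<Rightarrow> (nat \<Rightarrow> nat) \<Rightarrow> nat \<Rightarrow> (nat \<times> nat \<Rightarrow> nat \<Rightarrow> real)
    \<Rightarrow> (nat \<Rightarrow> real) \<Rightarrow> (nat \<times> nat) set \<Rightarrow> bool" where
  "knn_set d J n k x z S \<longleftrightarrow> S \<subseteq> train_idx J n \<and> card S = k \<and>
     (\<forall>p\<in>S. \<forall>q\<in>train_idx J n - S. eucl_dist d z (x p) \<le> eucl_dist d z (x q))"

definition votes :: "(nat \<times> nat) set \<Rightarrow> nat \<Rightarrow> nat" where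
  "votes S c = card {p\<in>S. fst p = c}"

text \<open>z is assigned to class j irrespective of how ties (in distances or votes) are broken.\<close>
definition knn_assigns :: "nat \<Rightarrow> nat \<Rightarrow> (nat \<Rightarrow> nat) \<Rightarrow> nat \<Rightarrow> (nat \<times> nat \<Rightarrow> nat \<Rightarrow> real)
    \<Rightarrow> (nat \<Rightarrow> real) \<Rightarrow> nat \<Rightarrow> bool" where
  "knn_assigns d J n k x z j \<longleftrightarrow> j < J \<and>
     (\<forall>S. knn_set d J n k x z S \<longrightarrow> (\<forall>c<J. c \<noteq> j \<longrightarrow> votes S c < votes S j))"

text \<open>z can be assigned to class j under some way of breaking ties.\<close>
definition knn_may_assign :: "nat \<Rightarrow> nat \<Rightarrow> (nat \<Rightarrow> nat) \<Rightarrow> nat \<Rightarrow> (nat \<times> nat \<Rightarrow> nat \<Rightarrow> real)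
    \<Rightarrow> (nat \<Rightarrow> real) \<Rightarrow> nat \<Rightarrow> bool" where
  "knn_may_assign d J n k x z j \<longleftrightarrow> j < J \<and>
     (\<exists>S. knn_set d J n k x z S \<and> (\<forall>c<J. votes S c \<le> votes S j))"

definition rho_gen :: "((nat \<Rightarrow> real) \<Rightarrow> (nat \<Rightarrow> real) \<Rightarrow> real) \<Rightarrow> (nat \<Rightarrow> nat)
    \<Rightarrow> (nat \<times> nat \<Rightarrow> nat \<Rightarrow> real) \<Rightarrow> (nat \<Rightarrow> real) \<Rightarrow> nat \<Rightarrow> nat \<Rightarrow> real" where
  "rho_gen \<delta> n x z c i = \<delta> z (x (c, i)) -
     (1/2) * ((\<Sum>t<n c. \<Sum>s<t. \<delta> (x (c, s)) (x (c, t))) / real (n c choose 2))"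

definition min_rho :: "((nat \<Rightarrow> real) \<Rightarrow> (nat \<Rightarrow> real) \<Rightarrow> real) \<Rightarrow> (nat \<Rightarrow> nat)
    \<Rightarrow> (nat \<times> nat \<Rightarrow> nat \<Rightarrow> real) \<Rightarrow> (nat \<Rightarrow> real) \<Rightarrow> nat \<Rightarrow> real" where
  "min_rho \<delta> n x z c = Min ((\<lambda>i. rho_gen \<delta> n x z c i) ` {..<n c})"

definition gen_assigns :: "((nat \<Rightarrow> real) \<Rightarrow> (nat \<Rightarrow> real) \<Rightarrow> real) \<Rightarrow> nat \<Rightarrow> (nat \<Rightarrow> nat)
    \<Rightarrow> (nat \<times> nat \<Rightarrow> nat \<Rightarrow> real) \<Rightarrow> (nat \<Rightarrow> real) \<Rightarrow> nat \<Rightarrow> bool" where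
  "gen_assigns \<delta> J n x z j0 \<longleftrightarrow> j0 < J \<and>
     (\<forall>c<J. c \<noteq> j0 \<longrightarrow> min_rho \<delta> n x z j0 < min_rho \<delta> n x z c)"

definition ch_assigns :: "nat \<Rightarrow> nat \<Rightarrow> (nat \<Rightarrow> nat)
    \<Rightarrow> (nat \<times> nat \<Rightarrow> nat \<Rightarrow> real) \<Rightarrow> (nat \<Rightarrow> real) \<Rightarrow> nat \<Rightarrow> bool" where
  "ch_assigns d = gen_assigns (\<lambda>u v. (eucl_dist d u v)^2)"

definition mch_assigns :: "nat \<Rightarrow> nat \<Rightarrow> (nat \<Rightarrow> nat)
    \<Rightarrow> (nat \<times> nat \<Rightarrow> nat \<Rightarrow> real) \<Rightarrow> (nat \<Rightarrow> real) \<Rightarrow> nat \<Rightarrow> bool" where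
  "mch_assigns d = gen_assigns (eucl_dist d)"

end

theory Submission
  imports Defs
begin


definition Dsq :: "nat \<Rightarrow> (nat\<Rightarrow>real) \<Rightarrow> (nat\<Rightarrow>real) \<Rightarrow> real" where
  "Dsq d u v = (\<Sum>r<d. (u r - v r)^2)"

lemma Dsq_nonneg: "0 \<le> Dsq d u v"
  unfolding Dsq_def by (intro sum_nonneg) auto

lemma eucl_dist_Dsq: "eucl_dist d u v = sqrt (Dsq d u v)"
  unfolding eucl_dist_def eucl_norm_def Dsq_def by simp

lemma Dsq_sym: "Dsq d u v = Dsq d v u"
  unfolding Dsq_def by (intro sum.cong) (auto simp: power2_commute)

lemma comp_meas:
  assumes "sets M = sets (vec_space d)" "r < d"
  shows "(\<lambda>x. x r) \<in> borel_measurable M"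
proof -
  have "(\<lambda>x. x r) \<in> borel_measurable (vec_space d)"
    unfolding vec_space_def using assms(2) by (intro measurable_component_singleton) auto
  then show ?thesis by (subst measurable_cong_sets[OF assms(1) refl])
qed

lemma pow_bounds:
  fixes y :: real
  shows "y^2 \<le> 1 + y^4" "\<bar>y\<bar> \<le> 1 + y^4"
proof -
  have a: "0 \<le> (y^2 - 1)^2" by simp
  have b: "0 \<le> (\<bar>y\<bar> - 1)^2" by simp
  have a': "(y^2 - 1)^2 = y^4 - 2*y^2 + 1" by (simp add: power2_eq_square algebra_simps power4_eq_xxxx)
  have b': "(\<bar>y\<bar> - 1)^2 = y^2 - 2*\<bar>y\<bar> + 1" by (simp add: power2_eq_square algebra_simps)
  have y4: "0 \<le> y^4" by simp
  show "y^2 \<le> 1 + y^4" using a a' y4 by linarith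
  then show "\<bar>y\<bar> \<le> 1 + y^4" using b b' y4 by linarith
qed

lemma pow4_diff: fixes a b :: real shows "(a - b)^4 \<le> 8 * (a^4 + b^4)"
proof -
  have 1: "(a - b)^2 \<le> 2 * (a^2 + b^2)"
    using sum_squares_ge_zero[of "a+b" 0] by (simp add: power2_eq_square algebra_simps)
  have "(a - b)^4 = ((a-b)^2)^2" by simp
  also have "\<dots> \<le> (2 * (a^2 + b^2))^2"
    using 1 by (intro power_mono) auto
  also have "\<dots> = 4 * (a^2+b^2)^2" by (subst power_mult_distrib) simp
  also have "\<dots> \<le> 8 * (a^4 + b^4)"
  proof -
    have "0 \<le> (a^2 - b^2)^2" by simp
    then show ?thesis by (simp add: power2_eq_square algebra_simps power4_eq_xxxx)
  qed
  finally show ?thesis .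
qed

lemma integrable_from4:
  fixes f :: "'a \<Rightarrow> real"
  assumes "prob_space M" "f \<in> borel_measurable M" "integrable M (\<lambda>x. f x ^ 4)"
  shows "integrable M f" "integrable M (\<lambda>x. f x ^ 2)"
proof -
  interpret prob_space M by fact
  have i: "integrable M (\<lambda>x. 1 + f x ^ 4)" using assms(3) by simp
  show "integrable M f"
    by (rule Bochner_Integration.integrable_bound[OF i assms(2)]) (auto simp: pow_bounds)
  show "integrable M (\<lambda>x. f x ^ 2)"
    by (rule Bochner_Integration.integrable_bound[OF i]) (use assms(2) in \<open>auto simp: pow_bounds\<close>)
qed

lemma distr_pair_snd':
  assumes "prob_space M1" "prob_space M2"
  shows "distr (M1 \<Otimes>\<^sub>M M2) M2 snd = M2"
proof (intro measure_eqI)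
  interpret prob_space M1 by fact
  interpret P2: prob_space M2 by fact
  fix A assume A: "A \<in> sets (distr (M1 \<Otimes>\<^sub>M M2) M2 snd)"
  from A have "emeasure (distr (M1 \<Otimes>\<^sub>M M2) M2 snd) A = emeasure (M1 \<Otimes>\<^sub>M M2) (space M1 \<times> A)"
    by (auto simp add: emeasure_distr space_pair_measure dest: sets.sets_into_space intro!: arg_cong2[where f=emeasure])
  with A show "emeasure (distr (M1 \<Otimes>\<^sub>M M2) M2 snd) A = emeasure M2 A"
    by (simp add: P2.emeasure_pair_measure_Times emeasure_space_1)
qed simp

lemma prod_fst:
  fixes f :: "'a \<Rightarrow> real"
  assumes "prob_space M2" "integrable M1 f"
  shows "integrable (M1 \<Otimes>\<^sub>M M2) (\<lambda>\<omega>. f (fst \<omega>))" "(\<integral>\<omega>. f (fst \<omega>) \<partial>(M1 \<Otimes>\<^sub>M M2)) = integral\<^sup>L M1 f"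
proof -
  have e: "distr (M1 \<Otimes>\<^sub>M M2) M1 fst = M1" using prob_space.distr_pair_fst[OF assms(1)] .
  have m: "f \<in> borel_measurable M1" using assms(2) by auto
  show "integrable (M1 \<Otimes>\<^sub>M M2) (\<lambda>\<omega>. f (fst \<omega>))"
    using integrable_distr_eq[of fst "M1 \<Otimes>\<^sub>M M2" M1 f] m assms(2) e by simp
  show "(\<integral>\<omega>. f (fst \<omega>) \<partial>(M1 \<Otimes>\<^sub>M M2)) = integral\<^sup>L M1 f"
    using integral_distr[of fst "M1 \<Otimes>\<^sub>M M2" M1 f] m e by simp
qed

lemma prod_snd:
  fixes f :: "'a \<Rightarrow> real"
  assumes "prob_space M1" "prob_space M2" "integrable M2 f"
  shows "integrable (M1 \<Otimes>\<^sub>M M2) (\<lambda>\<omega>. f (snd \<omega>))" "(\<integral>\<omega>. f (snd \<omega>) \<partial>(M1 \<Otimes>\<^sub>M M2)) = integral\<^sup>L M2 f"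
proof -
  have e: "distr (M1 \<Otimes>\<^sub>M M2) M2 snd = M2" using distr_pair_snd'[OF assms(1,2)] .
  have m: "f \<in> borel_measurable M2" using assms(3) by auto
  show "integrable (M1 \<Otimes>\<^sub>M M2) (\<lambda>\<omega>. f (snd \<omega>))"
    using integrable_distr_eq[of snd "M1 \<Otimes>\<^sub>M M2" M2 f] m assms(3) e by simp
  show "(\<integral>\<omega>. f (snd \<omega>) \<partial>(M1 \<Otimes>\<^sub>M M2)) = integral\<^sup>L M2 f"
    using integral_distr[of snd "M1 \<Otimes>\<^sub>M M2" M2 f] m e by simp
qed

lemma integrable_mult_sq:
  fixes f g :: "'a \<Rightarrow> real"
  assumes "f \<in> borel_measurable M" "g \<in> borel_measurable M"
    "integrable M (\<lambda>x. f x ^ 2)" "integrable M (\<lambda>x. g x ^ 2)"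
  shows "integrable M (\<lambda>x. f x * g x)"
proof (rule Bochner_Integration.integrable_bound)
  show "integrable M (\<lambda>x. f x ^ 2 + g x ^ 2)" using assms by simp
  show "(\<lambda>x. f x * g x) \<in> borel_measurable M" using assms by simp
  have "\<bar>f x * g x\<bar> \<le> f x ^ 2 + g x ^ 2" for x
  proof -
    have "0 \<le> (\<bar>f x\<bar> - \<bar>g x\<bar>)^2" by simp
    moreover have "(\<bar>f x\<bar> - \<bar>g x\<bar>)^2 = f x ^ 2 + g x ^ 2 - 2 * (\<bar>f x\<bar> * \<bar>g x\<bar>)"
      by (simp add: power2_diff)
    moreover have "0 \<le> \<bar>f x\<bar> * \<bar>g x\<bar>" by simp
    ultimately have "\<bar>f x\<bar> * \<bar>g x\<bar> \<le> f x ^ 2 + g x ^ 2" by linarith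
    then show ?thesis by (simp add: abs_mult)
  qed
  then show "AE x in M. norm (f x * g x) \<le> norm (f x ^ 2 + g x ^ 2)" by auto
qed

lemma prod_cross:
  fixes f g :: "'a \<Rightarrow> real"
  assumes "prob_space M1" "prob_space M2"
    "f \<in> borel_measurable M1" "g \<in> borel_measurable M2"
    "integrable M1 (\<lambda>x. f x ^ 2)" "integrable M2 (\<lambda>x. g x ^ 2)"
    "integrable M1 f" "integrable M2 g"
  shows "integrable (M1 \<Otimes>\<^sub>M M2) (\<lambda>\<omega>. f (fst \<omega>) * g (snd \<omega>))"
    "(\<integral>\<omega>. f (fst \<omega>) * g (snd \<omega>) \<partial>(M1 \<Otimes>\<^sub>M M2)) = integral\<^sup>L M1 f * integral\<^sup>L M2 g"
proof -
  interpret pair_prob_space M1 M2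
    using assms(1,2) by (simp add: pair_prob_space_def pair_sigma_finite_def prob_space_imp_sigma_finite)
  show I: "integrable (M1 \<Otimes>\<^sub>M M2) (\<lambda>\<omega>. f (fst \<omega>) * g (snd \<omega>))"
    by (rule integrable_mult_sq) (use assms prod_fst[OF assms(2) assms(5)] prod_snd[OF assms(1) assms(2) assms(6)] in auto)
  have "(\<integral>\<omega>. f (fst \<omega>) * g (snd \<omega>) \<partial>(M1 \<Otimes>\<^sub>M M2)) = (\<integral>x. (\<integral>y. f x * g y \<partial>M2) \<partial>M1)"
    using integral_fst'[OF I] by simp
  also have "\<dots> = (\<integral>x. f x * integral\<^sup>L M2 g \<partial>M1)" by simp
  also have "\<dots> = integral\<^sup>L M1 f * integral\<^sup>L M2 g" by simp
  finally show "(\<integral>\<omega>. f (fst \<omega>) * g (snd \<omega>) \<partial>(M1 \<Otimes>\<^sub>M M2)) = integral\<^sup>L M1 f * integral\<^sup>L M2 g" .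
qed


lemma var_alt:
  fixes f :: "'a \<Rightarrow> real"
  assumes "prob_space M" "integrable M f" "integrable M (\<lambda>x. f x ^ 2)"
  shows "var_of M f = integral\<^sup>L M (\<lambda>x. f x ^ 2) - (integral\<^sup>L M f)^2"
proof -
  interpret prob_space M by fact
  define c where "c = integral\<^sup>L M f"
  have e: "(f x - c)^2 = f x ^ 2 - 2 * c * f x + c^2" for x by (simp add: power2_diff algebra_simps)
  have "var_of M f = integral\<^sup>L M (\<lambda>x. f x ^ 2 - 2 * c * f x + c^2)"
    unfolding var_of_def c_def[symmetric] e ..
  also have "\<dots> = integral\<^sup>L M (\<lambda>x. f x ^ 2) - 2 * c * c + c^2"
    using assms by (simp add: c_def prob_space)
  finally show ?thesis by (simp add: c_def power2_eq_square)
qed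

lemma var_nonneg: "0 \<le> var_of M f"
  unfolding var_of_def by simp

lemma cov_self: "cov_of M f f = var_of M f"
  unfolding cov_of_def var_of_def by (simp add: power2_eq_square)

lemma cov_le_corr:
  fixes f g :: "'a \<Rightarrow> real"
  assumes "prob_space M" "f \<in> borel_measurable M" "g \<in> borel_measurable M"
    "integrable M (\<lambda>x. f x ^ 2)" "integrable M (\<lambda>x. g x ^ 2)"
    "var_of M f \<le> K" "var_of M g \<le> K"
  shows "cov_of M f g \<le> \<bar>corr_of M f g\<bar> * K"
proof -
  interpret prob_space M by fact
  have fi: "integrable M f" using assms(2,4) square_integrable_imp_integrable by blast
  have gi: "integrable M g" using assms(3,5) square_integrable_imp_integrable by blast
  define a where "a = (\<lambda>x. f x - integral\<^sup>L M f)"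
  define b where "b = (\<lambda>x. g x - integral\<^sup>L M g)"
  have am: "a \<in> borel_measurable M" "b \<in> borel_measurable M" using assms unfolding a_def b_def by auto
  have a2: "integrable M (\<lambda>x. a x ^ 2)" "integrable M (\<lambda>x. b x ^ 2)"
    using assms fi gi unfolding a_def b_def power2_diff by auto
  have vf: "var_of M f = integral\<^sup>L M (\<lambda>x. a x ^ 2)" unfolding var_of_def a_def ..
  have vg: "var_of M g = integral\<^sup>L M (\<lambda>x. b x ^ 2)" unfolding var_of_def b_def ..
  have cv: "cov_of M f g = integral\<^sup>L M (\<lambda>x. a x * b x)" unfolding cov_of_def a_def b_def ..
  have K: "0 \<le> K" using assms(6) var_nonneg[of M f] by linarith
  show ?thesis
  proof (cases "var_of M f = 0 \<or> var_of M g = 0")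
    case True
    have "cov_of M f g = 0"
    proof (cases "var_of M f = 0")
      case True
      then have "AE x in M. a x ^ 2 = 0"
        using integral_nonneg_eq_0_iff_AE[OF a2(1)] vf by simp
      then have "AE x in M. a x * b x = 0" by eventually_elim simp
      then have "integral\<^sup>L M (\<lambda>x. a x * b x) = integral\<^sup>L M (\<lambda>x. 0)"
        by (intro integral_cong_AE) (use am in auto)
      then show ?thesis using cv by simp
    next
      case False
      with \<open>var_of M f = 0 \<or> var_of M g = 0\<close> have "var_of M g = 0" by simp
      then have "AE x in M. b x ^ 2 = 0"
        using integral_nonneg_eq_0_iff_AE[OF a2(2)] vg by simp
      then have "AE x in M. a x * b x = 0" by eventually_elim simp
      then have "integral\<^sup>L M (\<lambda>x. a x * b x) = integral\<^sup>L M (\<lambda>x. 0)"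
        by (intro integral_cong_AE) (use am in auto)
      then show ?thesis using cv by simp
    qed
    then show ?thesis using K by simp
  next
    case False
    have pos: "0 < var_of M f * var_of M g"
      using False var_nonneg[of M f] var_nonneg[of M g] by (simp add: less_le)
    have sq: "0 < sqrt (var_of M f * var_of M g)" using pos by simp
    have "cov_of M f g = corr_of M f g * sqrt (var_of M f * var_of M g)"
    proof -
      have cs: "\<And>c s::real. s \<noteq> 0 \<Longrightarrow> c = c / s * s" by simp
      show ?thesis unfolding corr_of_def by (rule cs) (use sq in linarith)
    qed
    also have "\<dots> \<le> \<bar>corr_of M f g\<bar> * sqrt (var_of M f * var_of M g)"
      using sq by (intro mult_right_mono) auto
    also have "\<dots> \<le> \<bar>corr_of M f g\<bar> * sqrt (K * K)"
      using assms(6,7) var_nonneg[of M f] var_nonneg[of M g]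
      by (intro mult_left_mono real_sqrt_le_mono mult_mono) auto
    also have "\<dots> = \<bar>corr_of M f g\<bar> * K" using K by simp
    finally show ?thesis .
  qed
qed


lemma W_eq: "(\<lambda>(x,y). (x r - y r)^2) \<omega> = (fst \<omega> r - snd \<omega> r)^2" by (cases \<omega>) simp

lemma pair_moments:
  fixes M1 M2 :: "(nat \<Rightarrow> real) measure" and d :: nat and C :: real
  assumes p1: "prob_space M1" and p2: "prob_space M2"
    and s1: "sets M1 = sets (vec_space d)" and s2: "sets M2 = sets (vec_space d)"
    and i1: "\<And>r. r < d \<Longrightarrow> integrable M1 (\<lambda>x. (x r)^4)"
    and b1: "\<And>r. r < d \<Longrightarrow> (\<integral>x. (x r)^4 \<partial>M1) \<le> C"
    and i2: "\<And>r. r < d \<Longrightarrow> integrable M2 (\<lambda>x. (x r)^4)"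
    and b2: "\<And>r. r < d \<Longrightarrow> (\<integral>x. (x r)^4 \<partial>M2) \<le> C"
  defines "P \<equiv> M1 \<Otimes>\<^sub>M M2"
  defines "W \<equiv> (\<lambda>r. (\<lambda>(x,y). (x r - y r)^2)) :: nat \<Rightarrow> (nat\<Rightarrow>real)\<times>(nat\<Rightarrow>real) \<Rightarrow> real"
  defines "D \<equiv> \<lambda>\<omega>. Dsq d (fst \<omega>) (snd \<omega>)"
  shows "integral\<^sup>L P D = trace_disp d M1 + trace_disp d M2 + (\<Sum>r<d. (mean_vec M1 r - mean_vec M2 r)^2)"
    and "var_of P D \<le> 16 * C * real d + 16 * C * (\<Sum>r<d. \<Sum>s\<in>{..<d}-{r}. \<bar>corr_of P (W r) (W s)\<bar>)"
    and "\<And>a. 0 < a \<Longrightarrow> measure P {\<omega>\<in>space P. a \<le> \<bar>D \<omega> - integral\<^sup>L P D\<bar>} \<le> var_of P D / a^2"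
proof -
  interpret PP: pair_prob_space M1 M2
    using p1 p2 by (simp add: pair_prob_space_def pair_sigma_finite_def prob_space_imp_sigma_finite)
  have pP: "prob_space P" unfolding P_def by (rule PP.prob_space_axioms)
  have m1: "(\<lambda>x. x r) \<in> borel_measurable M1" if "r < d" for r using comp_meas[OF s1 that] .
  have m2: "(\<lambda>x. x r) \<in> borel_measurable M2" if "r < d" for r using comp_meas[OF s2 that] .
  have mf: "(\<lambda>\<omega>. fst \<omega> r) \<in> borel_measurable P" if "r < d" for r
    unfolding P_def by (rule measurable_compose[OF measurable_fst m1[OF that]])
  have ms: "(\<lambda>\<omega>. snd \<omega> r) \<in> borel_measurable P" if "r < d" for r
    unfolding P_def by (rule measurable_compose[OF measurable_snd m2[OF that]])
  have Wr: "W r = (\<lambda>\<omega>. (fst \<omega> r - snd \<omega> r)^2)" for r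
    unfolding W_def using W_eq by auto
  have Wm: "W r \<in> borel_measurable P" if "r < d" for r
    unfolding Wr using mf[OF that] ms[OF that] by simp
  have j1: "integrable M1 (\<lambda>x. x r)" "integrable M1 (\<lambda>x. (x r)^2)" if "r < d" for r
    using integrable_from4[OF p1 m1[OF that] i1[OF that]] by auto
  have j2: "integrable M2 (\<lambda>x. x r)" "integrable M2 (\<lambda>x. (x r)^2)" if "r < d" for r
    using integrable_from4[OF p2 m2[OF that] i2[OF that]] by auto
  have F1: "integrable P (\<lambda>\<omega>. fst \<omega> r)" "integrable P (\<lambda>\<omega>. (fst \<omega> r)^2)"
     "integrable P (\<lambda>\<omega>. (fst \<omega> r)^4)" if "r < d" for r
    unfolding P_def using prod_fst(1)[OF p2 j1(1)[OF that]] prod_fst(1)[OF p2 j1(2)[OF that]]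
      prod_fst(1)[OF p2 i1[OF that]] by auto
  have F2: "integrable P (\<lambda>\<omega>. snd \<omega> r)" "integrable P (\<lambda>\<omega>. (snd \<omega> r)^2)"
     "integrable P (\<lambda>\<omega>. (snd \<omega> r)^4)" if "r < d" for r
    unfolding P_def using prod_snd(1)[OF p1 p2 j2(1)[OF that]] prod_snd(1)[OF p1 p2 j2(2)[OF that]]
      prod_snd(1)[OF p1 p2 i2[OF that]] by auto
  have G1: "integral\<^sup>L P (\<lambda>\<omega>. fst \<omega> r) = integral\<^sup>L M1 (\<lambda>x. x r)"
    "integral\<^sup>L P (\<lambda>\<omega>. (fst \<omega> r)^2) = integral\<^sup>L M1 (\<lambda>x. (x r)^2)"
    "integral\<^sup>L P (\<lambda>\<omega>. (fst \<omega> r)^4) = integral\<^sup>L M1 (\<lambda>x. (x r)^4)" if "r < d" for r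
    unfolding P_def using prod_fst(2)[OF p2 j1(1)[OF that]] prod_fst(2)[OF p2 j1(2)[OF that]]
      prod_fst(2)[OF p2 i1[OF that]] by auto
  have G2: "integral\<^sup>L P (\<lambda>\<omega>. snd \<omega> r) = integral\<^sup>L M2 (\<lambda>x. x r)"
    "integral\<^sup>L P (\<lambda>\<omega>. (snd \<omega> r)^2) = integral\<^sup>L M2 (\<lambda>x. (x r)^2)"
    "integral\<^sup>L P (\<lambda>\<omega>. (snd \<omega> r)^4) = integral\<^sup>L M2 (\<lambda>x. (x r)^4)" if "r < d" for r
    unfolding P_def using prod_snd(2)[OF p1 p2 j2(1)[OF that]] prod_snd(2)[OF p1 p2 j2(2)[OF that]]
      prod_snd(2)[OF p1 p2 i2[OF that]] by auto
  have X: "integrable P (\<lambda>\<omega>. fst \<omega> r * snd \<omega> r)"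
    "integral\<^sup>L P (\<lambda>\<omega>. fst \<omega> r * snd \<omega> r) = integral\<^sup>L M1 (\<lambda>x. x r) * integral\<^sup>L M2 (\<lambda>x. x r)"
    if "r < d" for r
    unfolding P_def using prod_cross[OF p1 p2 m1[OF that] m2[OF that] j1(2)[OF that] j2(2)[OF that]
      j1(1)[OF that] j2(1)[OF that]] by auto
  have Wexp: "W r \<omega> = (fst \<omega> r)^2 - 2 * (fst \<omega> r * snd \<omega> r) + (snd \<omega> r)^2" for r \<omega>
    unfolding Wr by (simp add: power2_diff)
  have WI: "integrable P (W r)" if "r < d" for r
    unfolding Wexp using F1[OF that] F2[OF that] X[OF that] by simp
  have WE: "integral\<^sup>L P (W r) = var_of M1 (\<lambda>x. x r) + var_of M2 (\<lambda>x. x r)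
      + (mean_vec M1 r - mean_vec M2 r)^2" if "r < d" for r
  proof -
    have "integral\<^sup>L P (W r) = integral\<^sup>L M1 (\<lambda>x. (x r)^2) - 2 * (integral\<^sup>L M1 (\<lambda>x. x r) * integral\<^sup>L M2 (\<lambda>x. x r))
       + integral\<^sup>L M2 (\<lambda>x. (x r)^2)"
      unfolding Wexp using F1[OF that] F2[OF that] X[OF that] G1[OF that] G2[OF that] by simp
    then show ?thesis
      unfolding var_alt[OF p1 j1[OF that]] var_alt[OF p2 j2[OF that]] mean_vec_def
      by (simp add: power2_diff)
  qed
  have W2I: "integrable P (\<lambda>\<omega>. W r \<omega> ^ 2)" and W2E: "integral\<^sup>L P (\<lambda>\<omega>. W r \<omega> ^ 2) \<le> 16 * C"
    if "r < d" for r
  proof -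
    have eq: "W r \<omega> ^ 2 = (fst \<omega> r - snd \<omega> r)^4" for \<omega> unfolding Wr by simp
    have bd: "(fst \<omega> r - snd \<omega> r)^4 \<le> 8 * ((fst \<omega> r)^4 + (snd \<omega> r)^4)"
      for \<omega> :: "(nat \<Rightarrow> real) \<times> (nat \<Rightarrow> real)"
      by (rule pow4_diff)
    have BI: "integrable P (\<lambda>\<omega>. 8 * ((fst \<omega> r)^4 + (snd \<omega> r)^4))"
      using F1[OF that] F2[OF that] by simp
    show I: "integrable P (\<lambda>\<omega>. W r \<omega> ^ 2)"
    proof (rule Bochner_Integration.integrable_bound[OF BI])
      show "(\<lambda>\<omega>. W r \<omega> ^ 2) \<in> borel_measurable P" using Wm[OF that] by simp
      show "AE x in P. norm (W r x ^ 2) \<le> norm (8 * ((fst x r)^4 + (snd x r)^4))"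
        using bd unfolding eq by (auto simp: abs_of_nonneg)
    qed
    have "integral\<^sup>L P (\<lambda>\<omega>. W r \<omega> ^ 2) \<le> integral\<^sup>L P (\<lambda>\<omega>. 8 * ((fst \<omega> r)^4 + (snd \<omega> r)^4))"
      using I BI bd unfolding eq by (intro integral_mono) auto
    also have "\<dots> = 8 * (integral\<^sup>L M1 (\<lambda>x. (x r)^4) + integral\<^sup>L M2 (\<lambda>x. (x r)^4))"
      using F1[OF that] F2[OF that] G1[OF that] G2[OF that] by simp
    also have "\<dots> \<le> 16 * C" using b1[OF that] b2[OF that] by simp
    finally show "integral\<^sup>L P (\<lambda>\<omega>. W r \<omega> ^ 2) \<le> 16 * C" .
  qed
  have VW: "var_of P (W r) \<le> 16 * C" if "r < d" for r
  proof -
    have "var_of P (W r) = integral\<^sup>L P (\<lambda>\<omega>. W r \<omega> ^ 2) - (integral\<^sup>L P (W r))^2"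
      by (rule var_alt[OF pP WI[OF that] W2I[OF that]])
    also have "\<dots> \<le> integral\<^sup>L P (\<lambda>\<omega>. W r \<omega> ^ 2)" by simp
    finally show ?thesis using W2E[OF that] by simp
  qed
  have Deq: "D \<omega> = (\<Sum>r<d. W r \<omega>)" for \<omega>
    unfolding D_def Dsq_def Wr by simp
  have Dfun: "D = (\<lambda>\<omega>. \<Sum>r<d. W r \<omega>)" using Deq by auto
  have DI: "integrable P D" unfolding Dfun using WI by auto
  have DM: "D \<in> borel_measurable P" using DI by auto
  have DE: "integral\<^sup>L P D = (\<Sum>r<d. integral\<^sup>L P (W r))"
    unfolding Dfun using WI by (simp add: Bochner_Integration.integral_sum)
  show "integral\<^sup>L P D = trace_disp d M1 + trace_disp d M2 + (\<Sum>r<d. (mean_vec M1 r - mean_vec M2 r)^2)"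
    unfolding DE trace_disp_def by (simp add: WE sum.distrib)
  define e where "e r = integral\<^sup>L P (W r)" for r
  define V where "V r \<omega> = W r \<omega> - e r" for r \<omega>
  have VM: "V r \<in> borel_measurable P" if "r < d" for r unfolding V_def using Wm[OF that] by simp
  have V2: "integrable P (\<lambda>\<omega>. V r \<omega> ^ 2)" if "r < d" for r
  proof -
    have Ic: "integrable P (\<lambda>_. (e r)^2)" unfolding P_def by simp
    show ?thesis
      unfolding V_def power2_diff using W2I[OF that] WI[OF that] Ic by simp
  qed
  have VV: "integrable P (\<lambda>\<omega>. V r \<omega> * V s \<omega>)" if "r < d" "s < d" for r s
    by (rule integrable_mult_sq[OF VM[OF that(1)] VM[OF that(2)] V2[OF that(1)] V2[OF that(2)]])
  have Dc: "D \<omega> - integral\<^sup>L P D = (\<Sum>r<d. V r \<omega>)" for \<omega>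
    unfolding Deq DE V_def e_def by (simp add: sum_subtractf)
  have var_eq: "var_of P D = (\<Sum>r<d. \<Sum>s<d. cov_of P (W r) (W s))"
  proof -
    have "var_of P D = integral\<^sup>L P (\<lambda>\<omega>. \<Sum>r<d. \<Sum>s<d. V r \<omega> * V s \<omega>)"
      unfolding var_of_def Dc power2_eq_square sum_product ..
    also have "\<dots> = (\<Sum>r<d. \<Sum>s<d. integral\<^sup>L P (\<lambda>\<omega>. V r \<omega> * V s \<omega>))"
    proof -
      have "integral\<^sup>L P (\<lambda>\<omega>. \<Sum>r<d. \<Sum>s<d. V r \<omega> * V s \<omega>) =
          (\<Sum>r<d. integral\<^sup>L P (\<lambda>\<omega>. \<Sum>s<d. V r \<omega> * V s \<omega>))"
        by (rule Bochner_Integration.integral_sum[where I="{..<d}" and M=P and f="\<lambda>r \<omega>. \<Sum>s<d. V r \<omega> * V s \<omega>"])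
          (use VV in \<open>auto intro!: integrable_sum\<close>)
      also have "\<dots> = (\<Sum>r<d. \<Sum>s<d. integral\<^sup>L P (\<lambda>\<omega>. V r \<omega> * V s \<omega>))"
        by (intro sum.cong refl Bochner_Integration.integral_sum) (use VV in auto)
      finally show ?thesis .
    qed
    also have "\<dots> = (\<Sum>r<d. \<Sum>s<d. cov_of P (W r) (W s))"
      unfolding cov_of_def V_def e_def ..
    finally show ?thesis .
  qed
  have row: "(\<Sum>s<d. cov_of P (W r) (W s)) \<le> 16 * C + 16 * C * (\<Sum>s\<in>{..<d}-{r}. \<bar>corr_of P (W r) (W s)\<bar>)"
    if "r < d" for r
  proof -
    have "(\<Sum>s<d. cov_of P (W r) (W s)) = cov_of P (W r) (W r) + (\<Sum>s\<in>{..<d}-{r}. cov_of P (W r) (W s))"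
      using that by (subst sum.remove[of _ r]) auto
    also have "\<dots> \<le> 16 * C + (\<Sum>s\<in>{..<d}-{r}. \<bar>corr_of P (W r) (W s)\<bar> * (16 * C))"
    proof (rule add_mono)
      show "cov_of P (W r) (W r) \<le> 16 * C" unfolding cov_self using VW[OF that] .
      show "(\<Sum>s\<in>{..<d}-{r}. cov_of P (W r) (W s)) \<le> (\<Sum>s\<in>{..<d}-{r}. \<bar>corr_of P (W r) (W s)\<bar> * (16 * C))"
      proof (rule sum_mono)
        fix s assume "s \<in> {..<d}-{r}"
        then have s: "s < d" by auto
        show "cov_of P (W r) (W s) \<le> \<bar>corr_of P (W r) (W s)\<bar> * (16 * C)"
          by (rule cov_le_corr[OF pP Wm[OF that] Wm[OF s] W2I[OF that] W2I[OF s] VW[OF that] VW[OF s]])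
      qed
    qed
    also have "\<dots> = 16 * C + 16 * C * (\<Sum>s\<in>{..<d}-{r}. \<bar>corr_of P (W r) (W s)\<bar>)"
      by (simp add: sum_distrib_left mult.commute)
    finally show ?thesis .
  qed
  show "var_of P D \<le> 16 * C * real d + 16 * C * (\<Sum>r<d. \<Sum>s\<in>{..<d}-{r}. \<bar>corr_of P (W r) (W s)\<bar>)"
  proof -
    have "var_of P D \<le> (\<Sum>r<d. 16 * C + 16 * C * (\<Sum>s\<in>{..<d}-{r}. \<bar>corr_of P (W r) (W s)\<bar>))"
      unfolding var_eq by (rule sum_mono) (use row in auto)
    also have "\<dots> = 16 * C * real d + 16 * C * (\<Sum>r<d. \<Sum>s\<in>{..<d}-{r}. \<bar>corr_of P (W r) (W s)\<bar>)"
      by (simp add: sum.distrib sum_distrib_left)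
    finally show ?thesis .
  qed
  have D2: "integrable P (\<lambda>\<omega>. D \<omega> ^ 2)"
  proof -
    have "integrable P (\<lambda>\<omega>. \<Sum>r<d. \<Sum>s<d. W r \<omega> * W s \<omega>)"
      using integrable_mult_sq[OF Wm Wm W2I W2I] by (intro Bochner_Integration.integrable_sum) auto
    then show ?thesis unfolding Deq power2_eq_square sum_product .
  qed
  fix a :: real assume a: "0 < a"
  have "PP.prob {\<omega>\<in>space (M1 \<Otimes>\<^sub>M M2). \<bar>D \<omega> - PP.expectation D\<bar> \<ge> a} \<le> PP.variance D / a\<^sup>2"
    by (rule PP.Chebyshev_inequality) (use DM D2 a in \<open>auto simp: P_def\<close>)
  then show "measure P {\<omega>\<in>space P. a \<le> \<bar>D \<omega> - integral\<^sup>L P D\<bar>} \<le> var_of P D / a^2"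
    unfolding P_def var_of_def by simp
qed


lemma Dsq_meas:
  assumes f: "f \<in> measurable N M1" and g: "g \<in> measurable N M2"
    and s1: "sets M1 = sets (vec_space d)" and s2: "sets M2 = sets (vec_space d)"
  shows "(\<lambda>\<omega>. Dsq d (f \<omega>) (g \<omega>)) \<in> borel_measurable N"
proof -
  have "(\<lambda>\<omega>. (f \<omega> r - g \<omega> r)^2) \<in> borel_measurable N" if "r < d" for r
  proof -
    have "(\<lambda>\<omega>. f \<omega> r) \<in> borel_measurable N"
      by (rule measurable_compose[OF f comp_meas[OF s1 that]])
    moreover have "(\<lambda>\<omega>. g \<omega> r) \<in> borel_measurable N"
      by (rule measurable_compose[OF g comp_meas[OF s2 that]])
    ultimately show ?thesis by simp
  qed
  then show ?thesis unfolding Dsq_def by (intro borel_measurable_sum) auto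
qed

lemma alg_B: fixes C S e x :: real assumes "0 < e" "0 < x"
  shows "(16 * C * x + 16 * C * S) / (e/2 * x)^2 = 64 * C / e^2 * (1 / x) + 64 * C / e^2 * (S / x^2)"
  using assms by (simp add: field_simps power2_eq_square)

lemma wlln:
  fixes M1 M2 :: "nat \<Rightarrow> (nat \<Rightarrow> real) measure" and C mval \<epsilon> :: real
  assumes p1: "\<And>d. prob_space (M1 d)" and p2: "\<And>d. prob_space (M2 d)"
    and s1: "\<And>d. sets (M1 d) = sets (vec_space d)" and s2: "\<And>d. sets (M2 d) = sets (vec_space d)"
    and i1: "\<And>d r. r < d \<Longrightarrow> integrable (M1 d) (\<lambda>x. (x r)^4)"
    and b1: "\<And>d r. r < d \<Longrightarrow> (\<integral>x. (x r)^4 \<partial>M1 d) \<le> C"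
    and i2: "\<And>d r. r < d \<Longrightarrow> integrable (M2 d) (\<lambda>x. (x r)^4)"
    and b2: "\<And>d r. r < d \<Longrightarrow> (\<integral>x. (x r)^4 \<partial>M2 d) \<le> C"
    and A2: "(\<lambda>d. (\<Sum>r<d. \<Sum>s\<in>{..<d} - {r}.
                    \<bar>corr_of (M1 d \<Otimes>\<^sub>M M2 d) (\<lambda>(x, y). (x r - y r)^2) (\<lambda>(x, y). (x s - y s)^2)\<bar>)
                  / (real d)^2) \<longlonglongrightarrow> 0"
    and E: "(\<lambda>d. (trace_disp d (M1 d) + trace_disp d (M2 d) + (\<Sum>r<d. (mean_vec (M1 d) r - mean_vec (M2 d) r)^2))
              / real d) \<longlonglongrightarrow> mval"
    and eps: "0 < \<epsilon>"
  shows "(\<lambda>d. measure (M1 d \<Otimes>\<^sub>M M2 d) {\<omega>\<in>space (M1 d \<Otimes>\<^sub>M M2 d).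
            \<epsilon> < \<bar>Dsq d (fst \<omega>) (snd \<omega>) / real d - mval\<bar>}) \<longlonglongrightarrow> 0"
proof -
  define S where "S d = (\<Sum>r<d. \<Sum>s\<in>{..<d} - {r}.
                    \<bar>corr_of (M1 d \<Otimes>\<^sub>M M2 d) (\<lambda>(x, y). (x r - y r)^2) (\<lambda>(x, y). (x s - y s)^2)\<bar>)" for d
  define ED where "ED d = integral\<^sup>L (M1 d \<Otimes>\<^sub>M M2 d) (\<lambda>\<omega>. Dsq d (fst \<omega>) (snd \<omega>))" for d
  define K where "K = 64 * C / \<epsilon>^2"
  define B where "B d = K * (1 / real d) + K * (S d / (real d)^2)" for d
  have EDeq: "ED d = trace_disp d (M1 d) + trace_disp d (M2 d) + (\<Sum>r<d. (mean_vec (M1 d) r - mean_vec (M2 d) r)^2)" for d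
    unfolding ED_def by (rule pair_moments(1)[OF p1 p2 s1 s2 i1 b1 i2 b2])
  have Bt: "B \<longlonglongrightarrow> 0"
  proof -
    have "(\<lambda>d. K * (1 / real d) + K * (S d / (real d)^2)) \<longlonglongrightarrow> K * 0 + K * 0"
      using A2 lim_1_over_n unfolding S_def by (intro tendsto_intros) auto
    then show ?thesis unfolding B_def by simp
  qed
  have ED_lim: "(\<lambda>d. ED d / real d) \<longlonglongrightarrow> mval" unfolding EDeq using E .
  have ev1: "eventually (\<lambda>d. \<bar>ED d / real d - mval\<bar> < \<epsilon> / 2) sequentially"
    using ED_lim eps unfolding tendsto_iff dist_real_def by (auto dest!: spec[of _ "\<epsilon>/2"])
  have ev2: "eventually (\<lambda>d. (1::nat) \<le> d) sequentially" by (rule eventually_ge_at_top)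
  have le: "eventually (\<lambda>d. measure (M1 d \<Otimes>\<^sub>M M2 d) {\<omega>\<in>space (M1 d \<Otimes>\<^sub>M M2 d).
            \<epsilon> < \<bar>Dsq d (fst \<omega>) (snd \<omega>) / real d - mval\<bar>} \<le> B d) sequentially"
    using ev1 ev2
  proof eventually_elim
    case (elim d)
    let ?P = "M1 d \<Otimes>\<^sub>M M2 d"
    let ?D = "\<lambda>\<omega>. Dsq d (fst \<omega>) (snd \<omega>)"
    have dpos: "0 < real d" using elim by simp
    define a where "a = \<epsilon> / 2 * real d"
    have apos: "0 < a" unfolding a_def using eps dpos by simp
    have DM: "?D \<in> borel_measurable ?P"
      by (rule Dsq_meas[OF measurable_fst measurable_snd s1 s2])
    have sub: "{\<omega>\<in>space ?P. \<epsilon> < \<bar>?D \<omega> / real d - mval\<bar>} \<subseteq> {\<omega>\<in>space ?P. a \<le> \<bar>?D \<omega> - ED d\<bar>}"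
    proof safe
      fix \<omega> assume "\<omega> \<in> space ?P" "\<epsilon> < \<bar>?D \<omega> / real d - mval\<bar>"
      then have "\<epsilon> / 2 < \<bar>?D \<omega> / real d - ED d / real d\<bar>" using elim(1) by linarith
      also have "\<bar>?D \<omega> / real d - ED d / real d\<bar> = \<bar>?D \<omega> - ED d\<bar> / real d"
      proof -
        have "?D \<omega> / real d - ED d / real d = (?D \<omega> - ED d) / real d" by (rule diff_divide_distrib[symmetric])
        then show ?thesis using abs_div_pos[OF dpos] by simp
      qed
      finally have "\<epsilon> / 2 * real d < \<bar>?D \<omega> - ED d\<bar>" by (simp add: pos_less_divide_eq[OF dpos])
      then show "a \<le> \<bar>?D \<omega> - ED d\<bar>" unfolding a_def by simp
    qed
    interpret PP: pair_prob_space "M1 d" "M2 d"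
      using p1 p2 by (simp add: pair_prob_space_def pair_sigma_finite_def prob_space_imp_sigma_finite)
    have "measure ?P {\<omega>\<in>space ?P. \<epsilon> < \<bar>?D \<omega> / real d - mval\<bar>} \<le> measure ?P {\<omega>\<in>space ?P. a \<le> \<bar>?D \<omega> - ED d\<bar>}"
    proof (rule PP.finite_measure_mono[OF sub])
      have "(\<lambda>\<omega>. \<bar>?D \<omega> - ED d\<bar>) \<in> borel_measurable ?P" using DM by simp
      then show "{\<omega>\<in>space ?P. a \<le> \<bar>?D \<omega> - ED d\<bar>} \<in> sets ?P" by measurable
    qed
    also have "\<dots> \<le> var_of ?P ?D / a^2"
      unfolding ED_def by (rule pair_moments(3)[OF p1 p2 s1 s2 i1 b1 i2 b2 apos])
    also have "\<dots> \<le> (16 * C * real d + 16 * C * S d) / a^2"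
      unfolding S_def using apos
      by (intro divide_right_mono pair_moments(2)[OF p1 p2 s1 s2 i1 b1 i2 b2]) auto
    also have "\<dots> = B d"
      unfolding B_def K_def a_def by (rule alg_B[OF eps dpos])
    finally show ?case .
  qed
  have ge: "eventually (\<lambda>d. 0 \<le> measure (M1 d \<Otimes>\<^sub>M M2 d) {\<omega>\<in>space (M1 d \<Otimes>\<^sub>M M2 d).
            \<epsilon> < \<bar>Dsq d (fst \<omega>) (snd \<omega>) / real d - mval\<bar>}) sequentially" by simp
  show ?thesis by (rule tendsto_sandwich[OF ge le tendsto_const Bt])
qed


lemma distr_Zp:
  fixes Mc :: "'i \<Rightarrow> 'a measure"
  assumes pM: "\<And>i. i \<in> I \<Longrightarrow> prob_space (Mc i)" and pN: "prob_space N" and p: "p \<in> I"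
  shows "distr (PiM I Mc \<Otimes>\<^sub>M N) (N \<Otimes>\<^sub>M Mc p) (\<lambda>\<omega>. (snd \<omega>, fst \<omega> p)) = N \<Otimes>\<^sub>M Mc p"
proof -
  interpret N: prob_space N by fact
  interpret Mp: prob_space "Mc p" using pM p .
  interpret Pi: prob_space "PiM I Mc" using pM by (intro prob_space_PiM) auto
  have gm: "(\<lambda>\<omega>. (snd \<omega>, fst \<omega> p)) \<in> measurable (PiM I Mc \<Otimes>\<^sub>M N) (N \<Otimes>\<^sub>M Mc p)"
    using p by measurable
  show ?thesis
  proof (rule pair_measure_eqI[symmetric])
    show "sigma_finite_measure N" "sigma_finite_measure (Mc p)" by unfold_locales
    show "sets (N \<Otimes>\<^sub>M Mc p) = sets (distr (PiM I Mc \<Otimes>\<^sub>M N) (N \<Otimes>\<^sub>M Mc p) (\<lambda>\<omega>. (snd \<omega>, fst \<omega> p)))"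
      by simp
    fix A B assume A: "A \<in> sets N" and B: "B \<in> sets (Mc p)"
    have Bc: "{x\<in>space (PiM I Mc). x p \<in> B} \<in> sets (PiM I Mc)" using p B by measurable
    have pre: "(\<lambda>\<omega>. (snd \<omega>, fst \<omega> p)) -` (A \<times> B) \<inter> space (PiM I Mc \<Otimes>\<^sub>M N)
        = {x\<in>space (PiM I Mc). x p \<in> B} \<times> A"
      using A[THEN sets.sets_into_space] by (auto simp: space_pair_measure)
    have cmp: "emeasure (PiM I Mc) {x\<in>space (PiM I Mc). x p \<in> B} = emeasure (Mc p) B"
    proof -
      have "emeasure (Mc p) B = emeasure (distr (PiM I Mc) (Mc p) (\<lambda>\<omega>. \<omega> p)) B"
        using distr_PiM_component[of I Mc p, OF pM p] by simp
      also have "\<dots> = emeasure (PiM I Mc) ((\<lambda>\<omega>. \<omega> p) -` B \<inter> space (PiM I Mc))"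
        using B p by (intro emeasure_distr) auto
      also have "(\<lambda>\<omega>. \<omega> p) -` B \<inter> space (PiM I Mc) = {x\<in>space (PiM I Mc). x p \<in> B}" by auto
      finally show ?thesis by simp
    qed
    have "emeasure (distr (PiM I Mc \<Otimes>\<^sub>M N) (N \<Otimes>\<^sub>M Mc p) (\<lambda>\<omega>. (snd \<omega>, fst \<omega> p))) (A \<times> B)
        = emeasure (PiM I Mc \<Otimes>\<^sub>M N) ({x\<in>space (PiM I Mc). x p \<in> B} \<times> A)"
      using A B gm by (subst emeasure_distr) (auto simp: pre)
    also have "\<dots> = emeasure (PiM I Mc) {x\<in>space (PiM I Mc). x p \<in> B} * emeasure N A"
      using Bc A by (rule N.emeasure_pair_measure_Times)
    also have "\<dots> = emeasure N A * emeasure (Mc p) B" using cmp by (simp add: mult.commute)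
    finally show "emeasure N A * emeasure (Mc p) B =
      emeasure (distr (PiM I Mc \<Otimes>\<^sub>M N) (N \<Otimes>\<^sub>M Mc p) (\<lambda>\<omega>. (snd \<omega>, fst \<omega> p))) (A \<times> B)" by simp
  qed
qed

lemma distr_pq:
  fixes Mc :: "'i \<Rightarrow> 'a measure"
  assumes pM: "\<And>i. i \<in> I \<Longrightarrow> prob_space (Mc i)" and pN: "prob_space N"
    and p: "p \<in> I" and q: "q \<in> I" and pq: "p \<noteq> q"
  shows "distr (PiM I Mc \<Otimes>\<^sub>M N) (Mc p \<Otimes>\<^sub>M Mc q) (\<lambda>\<omega>. (fst \<omega> p, fst \<omega> q)) = Mc p \<Otimes>\<^sub>M Mc q"
proof -
  interpret N: prob_space N by fact
  interpret Mp: prob_space "Mc p" using pM p .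
  interpret Mq: prob_space "Mc q" using pM q .
  interpret Pi: prob_space "PiM I Mc" using pM by (intro prob_space_PiM) auto
  have gm: "(\<lambda>\<omega>. (fst \<omega> p, fst \<omega> q)) \<in> measurable (PiM I Mc \<Otimes>\<^sub>M N) (Mc p \<Otimes>\<^sub>M Mc q)"
    using p q by measurable
  show ?thesis
  proof (rule pair_measure_eqI[symmetric])
    show "sigma_finite_measure (Mc p)" "sigma_finite_measure (Mc q)" by unfold_locales
    show "sets (Mc p \<Otimes>\<^sub>M Mc q) = sets (distr (PiM I Mc \<Otimes>\<^sub>M N) (Mc p \<Otimes>\<^sub>M Mc q) (\<lambda>\<omega>. (fst \<omega> p, fst \<omega> q)))"
      by simp
    fix A B assume A: "A \<in> sets (Mc p)" and B: "B \<in> sets (Mc q)"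
    define X where "X = prod_emb I Mc {p, q} (PiE {p, q} (\<lambda>i. if i = p then A else B))"
    have Xs: "X \<in> sets (PiM I Mc)" unfolding X_def
      using p q A B by (intro sets_PiM_I) auto
    have Xeq: "X = {x\<in>space (PiM I Mc). x p \<in> A \<and> x q \<in> B}"
      unfolding X_def prod_emb_def space_PiM using pq by (auto simp: restrict_PiE_iff)
    have pre: "(\<lambda>\<omega>. (fst \<omega> p, fst \<omega> q)) -` (A \<times> B) \<inter> space (PiM I Mc \<Otimes>\<^sub>M N) = X \<times> space N"
      unfolding Xeq by (auto simp: space_pair_measure)
    have "emeasure (PiM I Mc) X = (\<Prod>i\<in>{p,q}. emeasure (Mc i) (if i = p then A else B))"
      unfolding X_def using p q A B pM by (intro emeasure_PiM_emb) auto
    also have "\<dots> = emeasure (Mc p) A * emeasure (Mc q) B" using pq by simp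
    finally have eX: "emeasure (PiM I Mc) X = emeasure (Mc p) A * emeasure (Mc q) B" .
    have "emeasure (distr (PiM I Mc \<Otimes>\<^sub>M N) (Mc p \<Otimes>\<^sub>M Mc q) (\<lambda>\<omega>. (fst \<omega> p, fst \<omega> q))) (A \<times> B)
        = emeasure (PiM I Mc \<Otimes>\<^sub>M N) (X \<times> space N)"
      using A B gm by (subst emeasure_distr) (auto simp: pre)
    also have "\<dots> = emeasure (PiM I Mc) X * emeasure N (space N)"
      using Xs by (intro N.emeasure_pair_measure_Times) auto
    also have "\<dots> = emeasure (Mc p) A * emeasure (Mc q) B" using eX by (simp add: N.emeasure_space_1)
    finally show "emeasure (Mc p) A * emeasure (Mc q) B =
      emeasure (distr (PiM I Mc \<Otimes>\<^sub>M N) (Mc p \<Otimes>\<^sub>M Mc q) (\<lambda>\<omega>. (fst \<omega> p, fst \<omega> q))) (A \<times> B)" by simp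
  qed
qed


lemma measure_transfer:
  assumes g: "g \<in> measurable M N" and e: "distr M N g = N" and S: "{x\<in>space N. P x} \<in> sets N"
  shows "measure M {\<omega>\<in>space M. P (g \<omega>)} = measure N {x\<in>space N. P x}"
proof -
  have "measure N {x\<in>space N. P x} = measure (distr M N g) {x\<in>space N. P x}" using e by simp
  also have "\<dots> = measure M (g -` {x\<in>space N. P x} \<inter> space M)" using measure_distr[OF g S] .
  also have "g -` {x\<in>space N. P x} \<inter> space M = {\<omega>\<in>space M. P (g \<omega>)}"
    using measurable_space[OF g] by auto
  finally show ?thesis by simp
qed

locale setting =
  fixes J :: nat and n :: "nat \<Rightarrow> nat"
    and F :: "nat \<Rightarrow> nat \<Rightarrow> (nat \<Rightarrow> real) measure"
    and sigma2 :: "nat \<Rightarrow> real" and nu2 :: "nat \<Rightarrow> nat \<Rightarrow> real"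
  assumes J2: "J \<ge> 2"
    and n2: "\<And>j. j < J \<Longrightarrow> n j \<ge> 2"
    and prob: "\<And>d j. j < J \<Longrightarrow> prob_space (F d j)"
    and sets_F: "\<And>d j. j < J \<Longrightarrow> sets (F d j) = sets (vec_space d)"
    and A1: "\<exists>C. \<forall>d j r. j < J \<longrightarrow> r < d \<longrightarrow>
               integrable (F d j) (\<lambda>x. (x r)^4) \<and> (\<integral>x. (x r)^4 \<partial>(F d j)) \<le> C"
    and A2: "\<And>j i. j < J \<Longrightarrow> i < J \<Longrightarrow>
               (\<lambda>d. (\<Sum>r<d. \<Sum>s\<in>{..<d} - {r}.
                    \<bar>corr_of (F d j \<Otimes>\<^sub>M F d i) (\<lambda>(x, y). (x r - y r)^2) (\<lambda>(x, y). (x s - y s)^2)\<bar>)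
                  / (real d)^2) \<longlonglongrightarrow> 0"
    and A3_sigma: "\<And>j. j < J \<Longrightarrow> (\<lambda>d. trace_disp d (F d j) / real d) \<longlonglongrightarrow> sigma2 j"
    and A3_nu: "\<And>j i. j < J \<Longrightarrow> i < J \<Longrightarrow> j \<noteq> i \<Longrightarrow>
               (\<lambda>d. (\<Sum>r<d. (mean_vec (F d j) r - mean_vec (F d i) r)^2) / real d) \<longlonglongrightarrow> nu2 j i"
begin

definition m :: "nat \<Rightarrow> nat \<Rightarrow> real" where
  "m a b = sigma2 a + sigma2 b + (if a = b then 0 else nu2 a b)"

abbreviation TT where "TT d j \<equiv> train_test J n (F d) j"

abbreviation I where "I \<equiv> train_idx J n"

lemma finite_I: "finite I"
proof -
  have "I \<subseteq> Sigma {..<J} (\<lambda>c. {..<n c})" unfolding train_idx_def by auto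
  then show ?thesis by (rule finite_subset) auto
qed

lemma I_fst: "p \<in> I \<Longrightarrow> fst p < J" unfolding train_idx_def by auto

lemma TT_eq: "TT d j = PiM I (\<lambda>p. F d (fst p)) \<Otimes>\<^sub>M F d j"
  unfolding train_test_def ..

lemma prob_TT: "j < J \<Longrightarrow> prob_space (TT d j)"
proof -
  assume j: "j < J"
  have p1: "prob_space (PiM I (\<lambda>p. F d (fst p)))" using prob I_fst by (intro prob_space_PiM) auto
  interpret PP: pair_prob_space "PiM I (\<lambda>p. F d (fst p))" "F d j"
    using p1 prob[OF j] by (simp add: pair_prob_space_def pair_sigma_finite_def prob_space_imp_sigma_finite)
  show ?thesis unfolding TT_eq by (rule PP.prob_space_axioms)
qed

lemma comp_TT: "p \<in> I \<Longrightarrow> (\<lambda>\<omega>. fst \<omega> p) \<in> measurable (TT d j) (F d (fst p))"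
  unfolding TT_eq by (rule measurable_compose[OF measurable_fst measurable_component_singleton])

lemma E_lim:
  assumes a: "a < J" and b: "b < J"
  shows "(\<lambda>d. (trace_disp d (F d a) + trace_disp d (F d b) + (\<Sum>r<d. (mean_vec (F d a) r - mean_vec (F d b) r)^2))
              / real d) \<longlonglongrightarrow> m a b"
proof (cases "a = b")
  case True
  have "(\<lambda>d. trace_disp d (F d a) / real d + trace_disp d (F d b) / real d) \<longlonglongrightarrow> sigma2 a + sigma2 b"
    using A3_sigma[OF a] A3_sigma[OF b] by (intro tendsto_add)
  then show ?thesis using True by (simp add: m_def add_divide_distrib)
next
  case False
  have "(\<lambda>d. trace_disp d (F d a) / real d + trace_disp d (F d b) / real d
      + (\<Sum>r<d. (mean_vec (F d a) r - mean_vec (F d b) r)^2) / real d) \<longlonglongrightarrow> sigma2 a + sigma2 b + nu2 a b"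
    using A3_sigma[OF a] A3_sigma[OF b] A3_nu[OF a b False] by (intro tendsto_add)
  then show ?thesis using False by (simp add: m_def add_divide_distrib)
qed

lemma pair_lim:
  assumes a: "a < J" and b: "b < J" and eps: "0 < \<epsilon>"
  shows "(\<lambda>d. measure (F d a \<Otimes>\<^sub>M F d b) {\<omega>\<in>space (F d a \<Otimes>\<^sub>M F d b).
            \<epsilon> < \<bar>Dsq d (fst \<omega>) (snd \<omega>) / real d - m a b\<bar>}) \<longlonglongrightarrow> 0"
proof -
  obtain C where C: "\<forall>d j r. j < J \<longrightarrow> r < d \<longrightarrow>
               integrable (F d j) (\<lambda>x. (x r)^4) \<and> (\<integral>x. (x r)^4 \<partial>(F d j)) \<le> C"
    using A1 by blast
  show ?thesis
    by (rule wlln[where C=C, OF prob[OF a] prob[OF b] sets_F[OF a] sets_F[OF b] _ _ _ _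
          A2[OF a b] E_lim[OF a b] eps]) (use C a b in auto)
qed

lemma sets_pairset:
  assumes a: "a < J" and b: "b < J"
  shows "{\<omega>\<in>space (F d a \<Otimes>\<^sub>M F d b). \<epsilon> < \<bar>Dsq d (fst \<omega>) (snd \<omega>) / real d - mm\<bar>} \<in> sets (F d a \<Otimes>\<^sub>M F d b)"
proof -
  have "(\<lambda>\<omega>. Dsq d (fst \<omega>) (snd \<omega>)) \<in> borel_measurable (F d a \<Otimes>\<^sub>M F d b)"
    by (rule Dsq_meas[OF measurable_fst measurable_snd sets_F[OF a] sets_F[OF b]])
  then show ?thesis by measurable
qed

definition BZ where
  "BZ d j \<epsilon> p = {\<omega>\<in>space (TT d j). \<epsilon> < \<bar>Dsq d (snd \<omega>) (fst \<omega> p) / real d - m j (fst p)\<bar>}"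

definition BW where
  "BW d j \<epsilon> c s t = {\<omega>\<in>space (TT d j). \<epsilon> < \<bar>Dsq d (fst \<omega> (c, s)) (fst \<omega> (c, t)) / real d - m c c\<bar>}"

lemma BZ_meas: "j < J \<Longrightarrow> p \<in> I \<Longrightarrow> BZ d j \<epsilon> p \<in> sets (TT d j)"
proof -
  assume j: "j < J" and p: "p \<in> I"
  have "(\<lambda>\<omega>. fst \<omega> p) \<in> measurable (TT d j) (F d (fst p))"
    using comp_TT[OF p] .
  then have "(\<lambda>\<omega>. Dsq d (snd \<omega>) (fst \<omega> p)) \<in> borel_measurable (TT d j)"
    by (intro Dsq_meas[OF _ _ sets_F[OF j] sets_F[OF I_fst[OF p]]]) (auto simp: TT_eq)
  then show ?thesis unfolding BZ_def by measurable
qed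

lemma BW_meas: "j < J \<Longrightarrow> c < J \<Longrightarrow> s < n c \<Longrightarrow> t < n c \<Longrightarrow> BW d j \<epsilon> c s t \<in> sets (TT d j)"
proof -
  assume j: "j < J" and c: "c < J" and s: "s < n c" and t: "t < n c"
  have ps: "(c, s) \<in> I" "(c, t) \<in> I" using c s t unfolding train_idx_def by auto
  have "(\<lambda>\<omega>. fst \<omega> (c, s)) \<in> measurable (TT d j) (F d c)"
    using comp_TT[OF ps(1)] by simp
  moreover have "(\<lambda>\<omega>. fst \<omega> (c, t)) \<in> measurable (TT d j) (F d c)"
    using comp_TT[OF ps(2)] by simp
  ultimately have "(\<lambda>\<omega>. Dsq d (fst \<omega> (c, s)) (fst \<omega> (c, t))) \<in> borel_measurable (TT d j)"
    by (intro Dsq_meas[OF _ _ sets_F[OF c] sets_F[OF c]])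
  then show ?thesis unfolding BW_def by measurable
qed

lemma BZ_lim:
  assumes j: "j < J" and p: "p \<in> I" and eps: "0 < \<epsilon>"
  shows "(\<lambda>d. measure (TT d j) (BZ d j \<epsilon> p)) \<longlonglongrightarrow> 0"
proof -
  have c: "fst p < J" using I_fst[OF p] .
  have eq: "measure (TT d j) (BZ d j \<epsilon> p) = measure (F d j \<Otimes>\<^sub>M F d (fst p)) {\<omega>\<in>space (F d j \<Otimes>\<^sub>M F d (fst p)).
            \<epsilon> < \<bar>Dsq d (fst \<omega>) (snd \<omega>) / real d - m j (fst p)\<bar>}" for d
  proof -
    have gm: "(\<lambda>\<omega>. (snd \<omega>, fst \<omega> p)) \<in> measurable (TT d j) (F d j \<Otimes>\<^sub>M F d (fst p))"
      using comp_TT[OF p] by (auto intro!: measurable_Pair simp: TT_eq)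
    have de: "distr (TT d j) (F d j \<Otimes>\<^sub>M F d (fst p)) (\<lambda>\<omega>. (snd \<omega>, fst \<omega> p)) = F d j \<Otimes>\<^sub>M F d (fst p)"
      unfolding TT_eq by (rule distr_Zp[where Mc="\<lambda>p. F d (fst p)", OF _ prob[OF j] p]) (use prob I_fst in auto)
    show ?thesis
      unfolding BZ_def using measure_transfer[OF gm de sets_pairset[OF j c]] by simp
  qed
  show ?thesis unfolding eq using pair_lim[OF j c eps] .
qed

lemma BW_lim:
  assumes j: "j < J" and c: "c < J" and s: "s < n c" and t: "t < n c" and st: "s \<noteq> t" and eps: "0 < \<epsilon>"
  shows "(\<lambda>d. measure (TT d j) (BW d j \<epsilon> c s t)) \<longlonglongrightarrow> 0"
proof -
  have ps: "(c, s) \<in> I" "(c, t) \<in> I" using c s t unfolding train_idx_def by auto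
  have eq: "measure (TT d j) (BW d j \<epsilon> c s t) = measure (F d c \<Otimes>\<^sub>M F d c) {\<omega>\<in>space (F d c \<Otimes>\<^sub>M F d c).
            \<epsilon> < \<bar>Dsq d (fst \<omega>) (snd \<omega>) / real d - m c c\<bar>}" for d
  proof -
    have gm: "(\<lambda>\<omega>. (fst \<omega> (c, s), fst \<omega> (c, t))) \<in> measurable (TT d j) (F d c \<Otimes>\<^sub>M F d c)"
      using comp_TT[OF ps(1)] comp_TT[OF ps(2)] by (auto intro!: measurable_Pair)
    have de: "distr (TT d j) (F d c \<Otimes>\<^sub>M F d c) (\<lambda>\<omega>. (fst \<omega> (c, s), fst \<omega> (c, t))) = F d c \<Otimes>\<^sub>M F d c"
      unfolding TT_eq
      using distr_pq[where Mc="\<lambda>p. F d (fst p)" and I=I and N="F d j" and p="(c,s)" and q="(c,t)"]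
        prob I_fst ps st j by auto
    show ?thesis
      unfolding BW_def using measure_transfer[OF gm de sets_pairset[OF c c]] by simp
  qed
  show ?thesis unfolding eq using pair_lim[OF c c eps] .
qed

end


lemma pred_le_fun: "f \<in> borel_measurable M \<Longrightarrow> g \<in> borel_measurable M \<Longrightarrow> Measurable.pred M (\<lambda>w. (f w :: real) \<le> g w)"
  unfolding pred_def by (rule borel_measurable_le)

lemma pred_less_fun: "f \<in> borel_measurable M \<Longrightarrow> g \<in> borel_measurable M \<Longrightarrow> Measurable.pred M (\<lambda>w. (f w :: real) < g w)"
  unfolding pred_def by (rule borel_measurable_less)

lemma pred_constant: "Measurable.pred M (\<lambda>_. P)"
  by (cases P) (auto simp: pred_def)

context setting begin

definition Tset where "Tset = Sigma {..<J} (\<lambda>c. Sigma {..<n c} (\<lambda>s. {..<n c} - {s}))"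

lemma finite_Tset: "finite Tset" unfolding Tset_def by (intro finite_SigmaI) auto

definition bad where
  "bad d j \<epsilon> = (\<Union>p\<in>I. BZ d j \<epsilon> p) \<union> (\<Union>x\<in>Tset. BW d j \<epsilon> (fst x) (fst (snd x)) (snd (snd x)))"

definition good where "good d j \<epsilon> = space (TT d j) - bad d j \<epsilon>"

lemma bad_meas: "j < J \<Longrightarrow> bad d j \<epsilon> \<in> sets (TT d j)"
  unfolding bad_def using finite_I finite_Tset BZ_meas BW_meas
  by (intro sets.Un sets.finite_UN) (auto simp: Tset_def)

lemma good_lim:
  assumes j: "j < J" and eps: "0 < \<epsilon>"
  shows "(\<lambda>d. measure (TT d j) (good d j \<epsilon>)) \<longlonglongrightarrow> 1"
proof -
  define s where "s d = (\<Sum>p\<in>I. measure (TT d j) (BZ d j \<epsilon> p))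
     + (\<Sum>x\<in>Tset. measure (TT d j) (BW d j \<epsilon> (fst x) (fst (snd x)) (snd (snd x))))" for d
  have s0: "s \<longlonglongrightarrow> 0"
  proof -
    have "(\<lambda>d. (\<Sum>p\<in>I. measure (TT d j) (BZ d j \<epsilon> p))) \<longlonglongrightarrow> 0"
      by (intro tendsto_null_sum BZ_lim[OF j _ eps])
    moreover have "(\<lambda>d. (\<Sum>x\<in>Tset. measure (TT d j) (BW d j \<epsilon> (fst x) (fst (snd x)) (snd (snd x))))) \<longlonglongrightarrow> 0"
      by (intro tendsto_null_sum BW_lim[OF j _ _ _ _ eps]) (auto simp: Tset_def)
    ultimately have "(\<lambda>d. (\<Sum>p\<in>I. measure (TT d j) (BZ d j \<epsilon> p)) +
        (\<Sum>x\<in>Tset. measure (TT d j) (BW d j \<epsilon> (fst x) (fst (snd x)) (snd (snd x))))) \<longlonglongrightarrow> 0 + 0"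
      by (rule tendsto_add)
    then show ?thesis unfolding s_def by simp
  qed
  have le: "measure (TT d j) (bad d j \<epsilon>) \<le> s d" for d
  proof -
    have "measure (TT d j) (bad d j \<epsilon>) \<le> measure (TT d j) (\<Union>p\<in>I. BZ d j \<epsilon> p)
        + measure (TT d j) (\<Union>x\<in>Tset. BW d j \<epsilon> (fst x) (fst (snd x)) (snd (snd x)))"
      unfolding bad_def using finite_I finite_Tset BZ_meas BW_meas
      by (intro measure_Un_le sets.finite_UN) (auto simp: Tset_def j)
    also have "\<dots> \<le> s d"
      unfolding s_def using finite_I finite_Tset BZ_meas BW_meas
      by (intro add_mono measure_UNION_le) (auto simp: Tset_def j)
    finally show ?thesis .
  qed
  have b0: "(\<lambda>d. measure (TT d j) (bad d j \<epsilon>)) \<longlonglongrightarrow> 0"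
    by (rule tendsto_sandwich[OF _ _ tendsto_const s0]) (use le in auto)
  have eq: "measure (TT d j) (good d j \<epsilon>) = 1 - measure (TT d j) (bad d j \<epsilon>)" for d
  proof -
    interpret prob_space "TT d j" using prob_TT[OF j] .
    show ?thesis unfolding good_def by (rule prob_compl[OF bad_meas[OF j]])
  qed
  have "(\<lambda>d. 1 - measure (TT d j) (bad d j \<epsilon>)) \<longlonglongrightarrow> 1 - 0"
    by (intro tendsto_diff tendsto_const b0)
  then show ?thesis unfolding eq by simp
qed

lemma good_memD:
  assumes "\<omega> \<in> good d j \<epsilon>"
  shows "\<omega> \<in> space (TT d j)"
    and "\<And>p. p \<in> I \<Longrightarrow> \<bar>Dsq d (snd \<omega>) (fst \<omega> p) / real d - m j (fst p)\<bar> \<le> \<epsilon>"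
    and "\<And>c s t. c < J \<Longrightarrow> s < n c \<Longrightarrow> t < n c \<Longrightarrow> s \<noteq> t \<Longrightarrow>
          \<bar>Dsq d (fst \<omega> (c, s)) (fst \<omega> (c, t)) / real d - m c c\<bar> \<le> \<epsilon>"
proof -
  show "\<omega> \<in> space (TT d j)" using assms unfolding good_def by auto
  show "\<bar>Dsq d (snd \<omega>) (fst \<omega> p) / real d - m j (fst p)\<bar> \<le> \<epsilon>" if "p \<in> I" for p
    using assms that unfolding good_def bad_def BZ_def by (auto simp: not_less)
  show "\<bar>Dsq d (fst \<omega> (c, s)) (fst \<omega> (c, t)) / real d - m c c\<bar> \<le> \<epsilon>"
    if "c < J" "s < n c" "t < n c" "s \<noteq> t" for c s t
  proof -
    have "(c, s, t) \<in> Tset" using that unfolding Tset_def by auto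
    then show ?thesis using assms unfolding good_def bad_def BW_def by (force simp: not_less)
  qed
qed

lemma conclude:
  assumes j: "j < J" and eps: "0 < \<epsilon>" and A: "\<And>d. A d \<in> sets (TT d j)"
    and sub: "eventually (\<lambda>d. good d j \<epsilon> \<subseteq> A d) sequentially"
  shows "(\<lambda>d. measure (TT d j) (A d)) \<longlonglongrightarrow> 1"
proof (rule tendsto_sandwich[OF _ _ good_lim[OF j eps] tendsto_const])
  show "eventually (\<lambda>d. measure (TT d j) (good d j \<epsilon>) \<le> measure (TT d j) (A d)) sequentially"
    using sub
  proof eventually_elim
    case (elim d)
    interpret prob_space "TT d j" using prob_TT[OF j] .
    show ?case using elim A by (intro finite_measure_mono) auto
  qed
  show "eventually (\<lambda>d. measure (TT d j) (A d) \<le> 1) sequentially"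
  proof (intro always_eventually allI)
    fix d
    interpret prob_space "TT d j" using prob_TT[OF j] .
    show "measure (TT d j) (A d) \<le> 1" by simp
  qed
qed

lemma distZ_meas: "j < J \<Longrightarrow> p \<in> I \<Longrightarrow> (\<lambda>\<omega>. Dsq d (snd \<omega>) (fst \<omega> p)) \<in> borel_measurable (TT d j)"
  by (intro Dsq_meas[OF _ comp_TT sets_F sets_F]) (auto simp: TT_eq I_fst)

lemma distW_meas: "p \<in> I \<Longrightarrow> q \<in> I \<Longrightarrow> (\<lambda>\<omega>. Dsq d (fst \<omega> p) (fst \<omega> q)) \<in> borel_measurable (TT d j)"
  by (intro Dsq_meas[OF comp_TT comp_TT sets_F sets_F]) (auto simp: I_fst)

lemma knn_set_alt:
  "knn_set d J n k x z S \<longleftrightarrow> S \<in> Pow I \<and> card S = k \<and>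
     (\<forall>p\<in>S. \<forall>q\<in>I - S. Dsq d z (x p) \<le> Dsq d z (x q))"
  unfolding knn_set_def eucl_dist_Dsq by auto

lemma knn_pred:
  assumes j: "j < J"
  shows "Measurable.pred (TT d j) (\<lambda>\<omega>. \<forall>S\<in>Pow I. (card S = k \<and>
     (\<forall>p\<in>S. \<forall>q\<in>I - S. Dsq d (snd \<omega>) (fst \<omega> p) \<le> Dsq d (snd \<omega>) (fst \<omega> q))) \<longrightarrow> Q S)"
proof (rule pred_intros_finite)
  show "finite (Pow I)" using finite_I by simp
  fix S assume S: "S \<in> Pow I"
  have fS: "finite S" using S finite_I finite_subset by auto
  show "Measurable.pred (TT d j) (\<lambda>\<omega>. (card S = k \<and>
     (\<forall>p\<in>S. \<forall>q\<in>I - S. Dsq d (snd \<omega>) (fst \<omega> p) \<le> Dsq d (snd \<omega>) (fst \<omega> q))) \<longrightarrow> Q S)"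
  proof (intro pred_intros_logic pred_constant pred_intros_finite fS)
    show "finite (I - S)" using finite_I by simp
    fix p q assume "p \<in> S" "q \<in> I - S"
    then have "p \<in> I" "q \<in> I" using S by auto
    then show "Measurable.pred (TT d j) (\<lambda>\<omega>. Dsq d (snd \<omega>) (fst \<omega> p) \<le> Dsq d (snd \<omega>) (fst \<omega> q))"
      by (intro pred_le_fun distZ_meas j)
  qed
qed

lemma knn_assigns_meas:
  assumes j: "j < J"
  shows "{xz \<in> space (TT d j). knn_assigns d J n k (fst xz) (snd xz) j} \<in> sets (TT d j)"
proof -
  have eq: "knn_assigns d J n k (fst xz) (snd xz) j \<longleftrightarrow> (\<forall>S\<in>Pow I. (card S = k \<and>
     (\<forall>p\<in>S. \<forall>q\<in>I - S. Dsq d (snd xz) (fst xz p) \<le> Dsq d (snd xz) (fst xz q))) \<longrightarrow>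
     (\<forall>c<J. c \<noteq> j \<longrightarrow> votes S c < votes S j))" for xz
    unfolding knn_assigns_def knn_set_alt using j by auto
  show ?thesis unfolding eq using knn_pred[OF j] unfolding pred_def .
qed

lemma knn_may_meas:
  assumes j: "j < J"
  shows "{xz \<in> space (TT d j). \<not> knn_may_assign d J n k (fst xz) (snd xz) j} \<in> sets (TT d j)"
proof -
  have eq: "(\<not> knn_may_assign d J n k (fst xz) (snd xz) j) \<longleftrightarrow> (\<forall>S\<in>Pow I. (card S = k \<and>
     (\<forall>p\<in>S. \<forall>q\<in>I - S. Dsq d (snd xz) (fst xz p) \<le> Dsq d (snd xz) (fst xz q))) \<longrightarrow>
     \<not> (\<forall>c<J. votes S c \<le> votes S j))" for xz
    unfolding knn_may_assign_def knn_set_alt using j by auto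
  show ?thesis unfolding eq using knn_pred[OF j] unfolding pred_def .
qed

lemma gen_meas:
  assumes j: "j < J"
    and \<delta>Z: "\<And>p. p \<in> I \<Longrightarrow> (\<lambda>\<omega>. \<delta> (snd \<omega>) (fst \<omega> p)) \<in> borel_measurable (TT d j)"
    and \<delta>W: "\<And>p q. p \<in> I \<Longrightarrow> q \<in> I \<Longrightarrow> (\<lambda>\<omega>. \<delta> (fst \<omega> p) (fst \<omega> q)) \<in> borel_measurable (TT d j)"
  shows "{xz \<in> space (TT d j). gen_assigns \<delta> J n (fst xz) (snd xz) j} \<in> sets (TT d j)"
proof -
  have rho: "(\<lambda>\<omega>. rho_gen \<delta> n (fst \<omega>) (snd \<omega>) c i) \<in> borel_measurable (TT d j)"
    if "c < J" "i < n c" for c i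
  proof -
    have ci: "(c, i) \<in> I" using that unfolding train_idx_def by auto
    have "(\<lambda>\<omega>. \<Sum>t<n c. \<Sum>s<t. \<delta> (fst \<omega> (c, s)) (fst \<omega> (c, t))) \<in> borel_measurable (TT d j)"
    proof (intro borel_measurable_sum)
      fix t s assume "t \<in> {..<n c}" "s \<in> {..<t}"
      then have "(c, s) \<in> I" "(c, t) \<in> I" using that unfolding train_idx_def by auto
      then show "(\<lambda>\<omega>. \<delta> (fst \<omega> (c, s)) (fst \<omega> (c, t))) \<in> borel_measurable (TT d j)" by (rule \<delta>W)
    qed
    then show ?thesis unfolding rho_gen_def using \<delta>Z[OF ci] by simp
  qed
  have mr: "(\<lambda>\<omega>. min_rho \<delta> n (fst \<omega>) (snd \<omega>) c) \<in> borel_measurable (TT d j)" if "c < J" for c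
    unfolding min_rho_def by (intro borel_measurable_Min) (use rho that in auto)
  have P: "Measurable.pred (TT d j) (\<lambda>\<omega>. \<forall>c\<in>{..<J}. c \<noteq> j \<longrightarrow>
      min_rho \<delta> n (fst \<omega>) (snd \<omega>) j < min_rho \<delta> n (fst \<omega>) (snd \<omega>) c)"
    by (intro pred_intros_finite pred_intros_logic pred_constant pred_less_fun mr j) auto
  have E: "gen_assigns \<delta> J n (fst xz) (snd xz) j \<longleftrightarrow> (\<forall>c\<in>{..<J}. c \<noteq> j \<longrightarrow>
      min_rho \<delta> n (fst xz) (snd xz) j < min_rho \<delta> n (fst xz) (snd xz) c)" for xz
    unfolding gen_assigns_def lessThan_iff Ball_def using j by blast
  show ?thesis using P unfolding pred_def E .
qed

lemma ch_meas:
  assumes j: "j < J"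
  shows "{xz \<in> space (TT d j). ch_assigns d J n (fst xz) (snd xz) j} \<in> sets (TT d j)"
  unfolding ch_assigns_def eucl_dist_Dsq
  by (rule gen_meas[OF j]) (use distZ_meas[OF j] distW_meas in \<open>auto simp: Dsq_nonneg\<close>)

lemma mch_meas:
  assumes j: "j < J"
  shows "{xz \<in> space (TT d j). mch_assigns d J n (fst xz) (snd xz) j} \<in> sets (TT d j)"
  unfolding mch_assigns_def
  by (rule gen_meas[OF j]) (use distZ_meas[OF j] distW_meas in \<open>auto simp: eucl_dist_Dsq\<close>)

end


lemma exists_pos_lb:
  fixes g :: "'a \<Rightarrow> real"
  assumes "finite A" "\<And>c. c \<in> A \<Longrightarrow> 0 < g c"
  shows "\<exists>e>0. \<forall>c\<in>A. e \<le> g c"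
proof (cases "A = {}")
  case True then show ?thesis by (intro exI[of _ 1]) auto
next
  case False
  show ?thesis
    by (intro exI[of _ "Min (g ` A)"]) (use assms False in auto)
qed

lemma sum_choose2: "(\<Sum>t<N. real t) = real (N choose 2)"
proof (induction N)
  case 0 then show ?case by simp
next
  case (Suc N)
  have "Suc N choose 2 = N + (N choose 2)"
    using binomial_Suc_Suc[of N 1] by (simp add: numeral_2_eq_2)
  then show ?case using Suc by simp
qed

lemma avg_bounds:
  fixes f :: "nat \<Rightarrow> nat \<Rightarrow> real"
  assumes N: "2 \<le> N" and b: "\<And>t s. t < N \<Longrightarrow> s < t \<Longrightarrow> lo \<le> f s t \<and> f s t \<le> hi"
  shows "lo \<le> (\<Sum>t<N. \<Sum>s<t. f s t) / real (N choose 2)" "(\<Sum>t<N. \<Sum>s<t. f s t) / real (N choose 2) \<le> hi"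
proof -
  have pos: "0 < real (N choose 2)" using N by simp
  have "(\<Sum>t<N. \<Sum>s<t. lo) \<le> (\<Sum>t<N. \<Sum>s<t. f s t)"
    using b by (intro sum_mono) auto
  moreover have "(\<Sum>t<N. \<Sum>s<t. lo) = lo * real (N choose 2)"
    by (simp add: sum_choose2[symmetric] sum_distrib_left mult.commute)
  ultimately show "lo \<le> (\<Sum>t<N. \<Sum>s<t. f s t) / real (N choose 2)"
    using pos by (simp add: pos_le_divide_eq)
  have "(\<Sum>t<N. \<Sum>s<t. f s t) \<le> (\<Sum>t<N. \<Sum>s<t. hi)"
    using b by (intro sum_mono) auto
  moreover have "(\<Sum>t<N. \<Sum>s<t. hi) = hi * real (N choose 2)"
    by (simp add: sum_choose2[symmetric] sum_distrib_left mult.commute)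
  ultimately show "(\<Sum>t<N. \<Sum>s<t. f s t) / real (N choose 2) \<le> hi"
    using pos by (simp add: pos_divide_le_eq)
qed

lemma sqrt_add_le: "0 \<le> a \<Longrightarrow> 0 \<le> b \<Longrightarrow> sqrt (a + b) \<le> sqrt a + sqrt b"
proof -
  assume a: "0 \<le> a" and b: "0 \<le> b"
  have "a + b \<le> (sqrt a + sqrt b)^2"
    using a b by (simp add: power2_sum)
  then have "sqrt (a + b) \<le> sqrt ((sqrt a + sqrt b)^2)" by (rule real_sqrt_le_mono)
  also have "\<dots> = sqrt a + sqrt b" using a b by simp
  finally show ?thesis .
qed

lemma lin_est:
  fixes D d mm e :: real
  assumes d: "0 < d" and h: "\<bar>D / d - mm\<bar> \<le> e"
  shows "d * (mm - e) \<le> D" "D \<le> d * (mm + e)"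
proof -
  have "mm - e \<le> D / d" "D / d \<le> mm + e" using h by auto
  then show "d * (mm - e) \<le> D" "D \<le> d * (mm + e)"
    using d by (simp_all add: pos_le_divide_eq pos_divide_le_eq mult.commute)
qed

lemma sqrt_est:
  fixes D d mm e :: real
  assumes D: "0 \<le> D" and d: "0 < d" and mm: "0 \<le> mm" and e: "0 \<le> e" and h: "\<bar>D / d - mm\<bar> \<le> e"
  shows "sqrt d * (sqrt mm - sqrt e) \<le> sqrt D" "sqrt D \<le> sqrt d * (sqrt mm + sqrt e)"
proof -
  define y where "y = D / d"
  have y: "0 \<le> y" unfolding y_def using D d by simp
  have Dy: "sqrt D = sqrt d * sqrt y" unfolding y_def using d by (simp add: real_sqrt_mult[symmetric])
  have "sqrt y \<le> sqrt (mm + e)" using h unfolding y_def by (intro real_sqrt_le_mono) auto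
  also have "\<dots> \<le> sqrt mm + sqrt e" by (rule sqrt_add_le[OF mm e])
  finally have up: "sqrt y \<le> sqrt mm + sqrt e" .
  have "sqrt mm \<le> sqrt (y + e)" using h unfolding y_def by (intro real_sqrt_le_mono) auto
  also have "\<dots> \<le> sqrt y + sqrt e" by (rule sqrt_add_le[OF y e])
  finally have lo: "sqrt mm - sqrt e \<le> sqrt y" by simp
  show "sqrt d * (sqrt mm - sqrt e) \<le> sqrt D" unfolding Dy using lo d by (intro mult_left_mono) auto
  show "sqrt D \<le> sqrt d * (sqrt mm + sqrt e)" unfolding Dy using up d by (intro mult_left_mono) auto
qed


context setting begin

lemma sigma_nonneg: "j < J \<Longrightarrow> 0 \<le> sigma2 j"
proof -
  assume j: "j < J"
  have "0 \<le> trace_disp d (F d j) / real d" for d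
    unfolding trace_disp_def by (intro divide_nonneg_nonneg sum_nonneg var_nonneg) auto
  then show ?thesis using LIMSEQ_le_const[OF A3_sigma[OF j]] by auto
qed

lemma nu_nonneg: "j < J \<Longrightarrow> i < J \<Longrightarrow> j \<noteq> i \<Longrightarrow> 0 \<le> nu2 j i"
proof -
  assume a: "j < J" "i < J" "j \<noteq> i"
  have "0 \<le> (\<Sum>r<d. (mean_vec (F d j) r - mean_vec (F d i) r)^2) / real d" for d
    by (intro divide_nonneg_nonneg sum_nonneg) auto
  then show ?thesis using LIMSEQ_le_const[OF A3_nu[OF a]] by auto
qed

lemma nu_sym: "j < J \<Longrightarrow> i < J \<Longrightarrow> j \<noteq> i \<Longrightarrow> nu2 j i = nu2 i j"
proof -
  assume a: "j < J" "i < J" "j \<noteq> i"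
  have eq: "(\<Sum>r<d. (mean_vec (F d j) r - mean_vec (F d i) r)^2) =
        (\<Sum>r<d. (mean_vec (F d i) r - mean_vec (F d j) r)^2)" for d
    by (rule sum.cong[OF refl]) (rule power2_commute)
  have l2: "(\<lambda>d. (\<Sum>r<d. (mean_vec (F d j) r - mean_vec (F d i) r)^2) / real d) \<longlonglongrightarrow> nu2 i j"
    unfolding eq using A3_nu[of i j] a by simp
  show ?thesis by (rule LIMSEQ_unique[OF A3_nu[OF a] l2])
qed

lemma m_nonneg: "a < J \<Longrightarrow> b < J \<Longrightarrow> 0 \<le> m a b"
  unfolding m_def using sigma_nonneg nu_nonneg by auto

lemma m_diag: "m a a = 2 * sigma2 a" unfolding m_def by simp

lemma class_idx:
  assumes c: "c < J"
  shows "(\<lambda>i. (c, i)) ` {..<n c} \<subseteq> I" "card ((\<lambda>i. (c, i)) ` {..<n c}) = n c"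
proof -
  show "(\<lambda>i. (c, i)) ` {..<n c} \<subseteq> I" using c unfolding train_idx_def by auto
  show "card ((\<lambda>i. (c, i)) ` {..<n c}) = n c" by (subst card_image) (auto simp: inj_on_def)
qed

lemma outside_exists:
  assumes c: "c < J" and S: "S \<subseteq> I" and k: "card S < n c"
  shows "\<exists>p\<in>I - S. fst p = c"
proof (rule ccontr)
  assume H: "\<not> (\<exists>p\<in>I - S. fst p = c)"
  have "(c, i) \<in> S" if i: "i < n c" for i
  proof (rule ccontr)
    assume "(c, i) \<notin> S"
    moreover have "(c, i) \<in> I" using class_idx(1)[OF c] i by auto
    ultimately have "(c, i) \<in> I - S" by simp
    then have "\<exists>p\<in>I - S. fst p = c" by (intro bexI[of _ "(c, i)"]) auto
    then show False using H by blast
  qed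
  then have "(\<lambda>i. (c, i)) ` {..<n c} \<subseteq> S" by auto
  then have "card ((\<lambda>i. (c, i)) ` {..<n c}) \<le> card S"
    using S finite_I by (intro card_mono) (auto intro: finite_subset)
  then show False using class_idx(2)[OF c] k by simp
qed

lemma knn_ok:
  assumes j: "j < J" and k1: "1 \<le> k" and kn: "k < n j" and d: "0 < real d"
    and HZ: "\<And>p. p \<in> I \<Longrightarrow> \<bar>Dsq d z (x p) / real d - m j (fst p)\<bar> \<le> \<epsilon>"
    and gap: "\<And>c. c < J \<Longrightarrow> c \<noteq> j \<Longrightarrow> m j j + 2 * \<epsilon> < m j c"
  shows "knn_assigns d J n k x z j"
proof -
  have close: "Dsq d z (x p) < Dsq d z (x q)"
    if p: "p \<in> I" "fst p = j" and q: "q \<in> I" "fst q \<noteq> j" for p q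
  proof -
    have "Dsq d z (x p) \<le> real d * (m j j + \<epsilon>)" using lin_est(2)[OF d HZ[OF p(1)]] p by simp
    also have "\<dots> < real d * (m j (fst q) - \<epsilon>)"
      using gap[OF I_fst[OF q(1)] q(2)] d by (intro mult_strict_left_mono) auto
    also have "\<dots> \<le> Dsq d z (x q)" using lin_est(1)[OF d HZ[OF q(1)]] .
    finally show ?thesis .
  qed
  show ?thesis unfolding knn_assigns_def
  proof (intro conjI j allI impI)
    fix S c assume S: "knn_set d J n k x z S" and c: "c < J" "c \<noteq> j"
    have SI: "S \<subseteq> I" and cS: "card S = k"
      and ord: "\<And>p q. p \<in> S \<Longrightarrow> q \<in> I - S \<Longrightarrow> Dsq d z (x p) \<le> Dsq d z (x q)"
      using S unfolding knn_set_alt by auto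
    have fS: "finite S" using SI finite_I finite_subset by auto
    have allj: "fst q = j" if q: "q \<in> S" for q
    proof (rule ccontr)
      assume nq: "fst q \<noteq> j"
      obtain p where p: "p \<in> I - S" "fst p = j" using outside_exists[OF j SI] cS kn by auto
      have "Dsq d z (x q) \<le> Dsq d z (x p)" using ord[OF q p(1)] .
      moreover have "Dsq d z (x p) < Dsq d z (x q)" using close[of p q] p nq q SI by auto
      ultimately show False by simp
    qed
    have "{p\<in>S. fst p = j} = S" using allj by auto
    then have vj: "votes S j = k" unfolding votes_def using cS by metis
    have "{p\<in>S. fst p = c} = {}" using allj c by auto
    then have "votes S c = 0" unfolding votes_def by (metis card.empty)
    then show "votes S c < votes S j" using vj k1 by simp
  qed
qed

lemma knn_bad:
  assumes j: "j < J" and i: "i < J" and ij: "i \<noteq> j" and k1: "1 \<le> k" and kn: "k < n i" and d: "0 < real d"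
    and HZ: "\<And>p. p \<in> I \<Longrightarrow> \<bar>Dsq d z (x p) / real d - m j (fst p)\<bar> \<le> \<epsilon>"
    and gap: "m j i + 2 * \<epsilon> < m j j"
  shows "\<not> knn_may_assign d J n k x z j"
proof
  assume "knn_may_assign d J n k x z j"
  then obtain S where S: "knn_set d J n k x z S" and vS: "\<And>c. c < J \<Longrightarrow> votes S c \<le> votes S j"
    unfolding knn_may_assign_def by auto
  have SI: "S \<subseteq> I" and cS: "card S = k"
    and ord: "\<And>p q. p \<in> S \<Longrightarrow> q \<in> I - S \<Longrightarrow> Dsq d z (x p) \<le> Dsq d z (x q)"
    using S unfolding knn_set_alt by auto
  have fS: "finite S" using SI finite_I finite_subset by auto
  have close: "Dsq d z (x p) < Dsq d z (x q)"
    if p: "p \<in> I" "fst p = i" and q: "q \<in> I" "fst q = j" for p q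
  proof -
    have "Dsq d z (x p) \<le> real d * (m j i + \<epsilon>)" using lin_est(2)[OF d HZ[OF p(1)]] p by simp
    also have "\<dots> < real d * (m j j - \<epsilon>)"
      using gap d by (intro mult_strict_left_mono) auto
    also have "\<dots> \<le> Dsq d z (x q)" using lin_est(1)[OF d HZ[OF q(1)]] q by simp
    finally show ?thesis .
  qed
  have noj: "fst q \<noteq> j" if q: "q \<in> S" for q
  proof
    assume qj: "fst q = j"
    obtain p where p: "p \<in> I - S" "fst p = i" using outside_exists[OF i SI] cS kn by auto
    have "Dsq d z (x q) \<le> Dsq d z (x p)" using ord[OF q p(1)] .
    moreover have "Dsq d z (x p) < Dsq d z (x q)" using close[of p q] p qj q SI by auto
    ultimately show False by simp
  qed
  have "{p\<in>S. fst p = j} = {}" using noj by auto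
  then have vj: "votes S j = 0" unfolding votes_def by (metis card.empty)
  have "S \<noteq> {}" using cS k1 by auto
  then obtain q where q: "q \<in> S" by auto
  have c: "fst q < J" using q SI by (intro I_fst) auto
  have "q \<in> {p\<in>S. fst p = fst q}" using q by simp
  then have "0 < votes S (fst q)" unfolding votes_def using fS
    by (metis (no_types, lifting) card_gt_0_iff empty_iff finite_subset mem_Collect_eq subsetI)
  with vS[OF c] vj show False by simp
qed

lemma gen_ok:
  fixes \<delta> :: "(nat \<Rightarrow> real) \<Rightarrow> (nat \<Rightarrow> real) \<Rightarrow> real" and lam \<eta> :: real and a b :: "nat \<Rightarrow> real"
  assumes j: "j < J" and lam: "0 < lam"
    and Zj: "\<And>i. i < n j \<Longrightarrow> \<delta> z (x (j, i)) \<le> lam * (a j + \<eta>)"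
    and Zc: "\<And>c i. c < J \<Longrightarrow> c \<noteq> j \<Longrightarrow> i < n c \<Longrightarrow> lam * (a c - \<eta>) \<le> \<delta> z (x (c, i))"
    and Wb: "\<And>c t s. c < J \<Longrightarrow> t < n c \<Longrightarrow> s < t \<Longrightarrow>
              lam * (b c - \<eta>) \<le> \<delta> (x (c, s)) (x (c, t)) \<and> \<delta> (x (c, s)) (x (c, t)) \<le> lam * (b c + \<eta>)"
    and gap: "\<And>c. c < J \<Longrightarrow> c \<noteq> j \<Longrightarrow> a j + \<eta> - (b j - \<eta>) / 2 < a c - \<eta> - (b c + \<eta>) / 2"
  shows "gen_assigns \<delta> J n x z j"
proof -
  define avg where "avg c = (\<Sum>t<n c. \<Sum>s<t. \<delta> (x (c, s)) (x (c, t))) / real (n c choose 2)" for c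
  have avg: "lam * (b c - \<eta>) \<le> avg c" "avg c \<le> lam * (b c + \<eta>)" if c: "c < J" for c
    unfolding avg_def using avg_bounds[OF n2[OF c], of "lam * (b c - \<eta>)" "\<lambda>s t. \<delta> (x (c, s)) (x (c, t))"
      "lam * (b c + \<eta>)"] Wb[OF c] by auto
  have rho: "rho_gen \<delta> n x z c i = \<delta> z (x (c, i)) - 1/2 * avg c" for c i
    unfolding rho_gen_def avg_def ..
  define U where "U = lam * (a j + \<eta> - (b j - \<eta>) / 2)"
  have rj: "rho_gen \<delta> n x z j 0 \<le> U"
  proof -
    have "0 < n j" using n2[OF j] by simp
    then have "\<delta> z (x (j, 0)) \<le> lam * (a j + \<eta>)" by (rule Zj)
    moreover have "lam * (a j + \<eta> - (b j - \<eta>) / 2) = lam * (a j + \<eta>) - lam * (b j - \<eta>) / 2"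
      by (simp add: algebra_simps)
    ultimately show ?thesis unfolding rho U_def using avg(1)[OF j] by linarith
  qed
  have mj: "min_rho \<delta> n x z j \<le> U"
  proof -
    have "min_rho \<delta> n x z j \<le> rho_gen \<delta> n x z j 0"
      unfolding min_rho_def using n2[OF j] by (intro Min_le) auto
    then show ?thesis using rj by simp
  qed
  have mc: "U < min_rho \<delta> n x z c" if c: "c < J" "c \<noteq> j" for c
  proof -
    have "U < rho_gen \<delta> n x z c i" if i: "i < n c" for i
    proof -
      have "U < lam * (a c - \<eta> - (b c + \<eta>) / 2)"
        unfolding U_def using gap[OF c] lam by (intro mult_strict_left_mono) auto
      also have "\<dots> \<le> rho_gen \<delta> n x z c i"
      proof -
        have "lam * (a c - \<eta> - (b c + \<eta>) / 2) = lam * (a c - \<eta>) - lam * (b c + \<eta>) / 2"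
          by (simp add: algebra_simps)
        then show ?thesis unfolding rho using Zc[OF c i] avg(2)[OF c(1)] by linarith
      qed
      finally show ?thesis .
    qed
    moreover have "{..<n c} \<noteq> {}"
    proof -
      have "0 \<in> {..<n c}" using n2[OF c(1)] by simp
      then show ?thesis by blast
    qed
    ultimately show ?thesis unfolding min_rho_def by (subst Min_gr_iff) auto
  qed
  show ?thesis unfolding gen_assigns_def using j mj mc by (auto intro: le_less_trans)
qed

end


lemma lin1: fixes a b e :: real shows "e \<le> (a - b) / 3 \<Longrightarrow> 0 < e \<Longrightarrow> b + 2 * e < a" by (simp add: field_simps)
lemma lin2: fixes a b :: real shows "b < a \<Longrightarrow> b + 2 * ((a - b) / 3) < a" by (simp add: field_simps)
lemma lin3: fixes a b :: real shows "b < a \<Longrightarrow> 0 < (a - b) / 3" by (simp add: field_simps)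

context setting begin

lemma mem_class: "c < J \<Longrightarrow> i < n c \<Longrightarrow> (c, i) \<in> I"
  unfolding train_idx_def by auto

lemma ev_good:
  assumes "\<And>d \<omega>. 1 \<le> d \<Longrightarrow> \<omega> \<in> good d j \<epsilon> \<Longrightarrow> P d \<omega>"
  shows "eventually (\<lambda>d. good d j \<epsilon> \<subseteq> {xz \<in> space (TT d j). P d xz}) sequentially"
  using eventually_ge_at_top[of "1::nat"]
proof eventually_elim
  case (elim d)
  then show ?case using assms good_memD(1) by auto
qed

lemma part_a1:
  assumes k1: "1 \<le> k" and kn: "\<forall>j<J. k < n j"
    and nu: "\<forall>j<J. \<forall>i<J. j \<noteq> i \<longrightarrow> nu2 j i > \<bar>sigma2 j - sigma2 i\<bar>" and j: "j < J"
  shows "(\<lambda>d. measure (TT d j) {xz \<in> space (TT d j). knn_assigns d J n k (fst xz) (snd xz) j}) \<longlonglongrightarrow> 1"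
proof -
  have pos: "0 < (m j c - m j j) / 3" if "c \<in> {..<J} - {j}" for c
  proof -
    have c: "c < J" "c \<noteq> j" using that by auto
    have "nu2 j c > \<bar>sigma2 j - sigma2 c\<bar>" using nu j c by auto
    then show ?thesis unfolding m_def using c by auto
  qed
  obtain \<epsilon> where eps: "0 < \<epsilon>" and le: "\<forall>c\<in>{..<J} - {j}. \<epsilon> \<le> (m j c - m j j) / 3"
    using exists_pos_lb[of "{..<J} - {j}" "\<lambda>c. (m j c - m j j) / 3"] pos by auto
  have gap: "m j j + 2 * \<epsilon> < m j c" if "c < J" "c \<noteq> j" for c
  proof -
    have "c \<in> {..<J} - {j}" using that by auto
    then have "\<epsilon> \<le> (m j c - m j j) / 3" using le by blast
    then show ?thesis using eps by (rule lin1)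
  qed
  show ?thesis
  proof (rule conclude[OF j eps knn_assigns_meas[OF j]])
    show "eventually (\<lambda>d. good d j \<epsilon> \<subseteq> {xz \<in> space (TT d j). knn_assigns d J n k (fst xz) (snd xz) j}) sequentially"
    proof (rule ev_good)
      fix d \<omega> assume d: "1 \<le> d" and w: "\<omega> \<in> good d j \<epsilon>"
      show "knn_assigns d J n k (fst \<omega>) (snd \<omega>) j"
        by (rule knn_ok[OF j k1 _ _ good_memD(2)[OF w] gap]) (use kn j d in auto)
    qed
  qed
qed

lemma part_a2_aux:
  assumes k1: "1 \<le> k" and kn: "\<forall>j<J. k < n j"
    and j: "j < J" and i: "i < J" and ij: "i \<noteq> j" and mm: "m j i < m j j"
  shows "(\<lambda>d. measure (TT d j) {xz \<in> space (TT d j). \<not> knn_may_assign d J n k (fst xz) (snd xz) j}) \<longlonglongrightarrow> 1"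
proof -
  define \<epsilon> where "\<epsilon> = (m j j - m j i) / 3"
  have eps: "0 < \<epsilon>" and gap: "m j i + 2 * \<epsilon> < m j j" unfolding \<epsilon>_def using mm
    by (rule lin3, rule lin2)
  show ?thesis
  proof (rule conclude[OF j eps knn_may_meas[OF j]])
    show "eventually (\<lambda>d. good d j \<epsilon> \<subseteq> {xz \<in> space (TT d j). \<not> knn_may_assign d J n k (fst xz) (snd xz) j}) sequentially"
    proof (rule ev_good)
      fix d \<omega> assume d: "1 \<le> d" and w: "\<omega> \<in> good d j \<epsilon>"
      show "\<not> knn_may_assign d J n k (fst \<omega>) (snd \<omega>) j"
        by (rule knn_bad[OF j i ij k1 _ _ good_memD(2)[OF w] gap]) (use kn i d in auto)
    qed
  qed
qed

lemma part_a2: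
  assumes k1: "1 \<le> k" and kn: "\<forall>j<J. k < n j"
    and ex: "\<exists>j<J. \<exists>i<J. j \<noteq> i \<and> nu2 j i < \<bar>sigma2 j - sigma2 i\<bar>"
  shows "\<exists>j<J. (\<lambda>d. measure (TT d j) {xz \<in> space (TT d j). \<not> knn_may_assign d J n k (fst xz) (snd xz) j}) \<longlonglongrightarrow> 1"
proof -
  obtain j0 i0 where a: "j0 < J" "i0 < J" "j0 \<noteq> i0" "nu2 j0 i0 < \<bar>sigma2 j0 - sigma2 i0\<bar>" using ex by blast
  show ?thesis
  proof (cases "sigma2 i0 \<le> sigma2 j0")
    case True
    have "m j0 i0 < m j0 j0" unfolding m_def using a True by auto
    then show ?thesis using part_a2_aux[OF k1 kn a(1) a(2) a(3)[symmetric]] a(1) by blast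
  next
    case False
    have "nu2 i0 j0 = nu2 j0 i0" using nu_sym a by auto
    then have "m i0 j0 < m i0 i0" unfolding m_def using a False by auto
    then show ?thesis using part_a2_aux[OF k1 kn a(2) a(1) a(3)] a(2) by blast
  qed
qed

lemma eucl_sq: "(eucl_dist d u v)^2 = Dsq d u v"
  unfolding eucl_dist_Dsq using Dsq_nonneg by simp

lemma part_b:
  assumes nu: "\<forall>j<J. \<forall>i<J. j \<noteq> i \<longrightarrow> nu2 j i > 0" and j: "j < J"
  shows "(\<lambda>d. measure (TT d j) {xz \<in> space (TT d j). ch_assigns d J n (fst xz) (snd xz) j}) \<longlonglongrightarrow> 1"
proof -
  obtain \<epsilon> where eps: "0 < \<epsilon>" and le: "\<forall>c\<in>{..<J} - {j}. \<epsilon> \<le> nu2 j c / 4"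
    using exists_pos_lb[of "{..<J} - {j}" "\<lambda>c. nu2 j c / 4"] nu j by auto
  show ?thesis
  proof (rule conclude[OF j eps ch_meas[OF j]])
    show "eventually (\<lambda>d. good d j \<epsilon> \<subseteq> {xz \<in> space (TT d j). ch_assigns d J n (fst xz) (snd xz) j}) sequentially"
    proof (rule ev_good)
      fix d \<omega> assume d1: "1 \<le> d" and w: "\<omega> \<in> good d j \<epsilon>"
      have d: "0 < real d" using d1 by simp
      note HZ = good_memD(2)[OF w] and HW = good_memD(3)[OF w]
      show "ch_assigns d J n (fst \<omega>) (snd \<omega>) j"
        unfolding ch_assigns_def
      proof (rule gen_ok[OF j d, where a="m j" and b="\<lambda>c. m c c" and \<eta>=\<epsilon>])
        fix i assume "i < n j"
        then have "(j, i) \<in> I" by (rule mem_class[OF j])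
        then show "(eucl_dist d (snd \<omega>) (fst \<omega> (j, i)))^2 \<le> real d * (m j j + \<epsilon>)"
          unfolding eucl_sq using lin_est(2)[OF d HZ] by fastforce
      next
        fix c i assume c: "c < J" "c \<noteq> j" "i < n c"
        then have "(c, i) \<in> I" by (intro mem_class)
        then show "real d * (m j c - \<epsilon>) \<le> (eucl_dist d (snd \<omega>) (fst \<omega> (c, i)))^2"
          unfolding eucl_sq using lin_est(1)[OF d HZ] by fastforce
      next
        fix c t s assume c: "c < J" "t < n c" "s < t"
        have h: "\<bar>Dsq d (fst \<omega> (c, s)) (fst \<omega> (c, t)) / real d - m c c\<bar> \<le> \<epsilon>"
          using HW c by auto
        show "real d * (m c c - \<epsilon>) \<le> (eucl_dist d (fst \<omega> (c, s)) (fst \<omega> (c, t)))^2 \<and>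
              (eucl_dist d (fst \<omega> (c, s)) (fst \<omega> (c, t)))^2 \<le> real d * (m c c + \<epsilon>)"
          unfolding eucl_sq using lin_est[OF d h] by auto
      next
        fix c assume c: "c < J" "c \<noteq> j"
        have "\<epsilon> \<le> nu2 j c / 4" using le c by auto
        moreover have "0 < nu2 j c" using nu j c by auto
        ultimately show "m j j + \<epsilon> - (m j j - \<epsilon>) / 2 < m j c - \<epsilon> - (m c c + \<epsilon>) / 2"
          unfolding m_def using c by (simp add: field_simps)
      qed
    qed
  qed
qed

lemma gpos:
  assumes j: "j < J" and c: "c < J" "c \<noteq> j" and h: "0 < nu2 j c \<or> sigma2 j \<noteq> sigma2 c"
  shows "sqrt (m j j) / 2 + sqrt (m c c) / 2 < sqrt (m j c)"
proof -
  define A where "A = sqrt (m j j)"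
  define B where "B = sqrt (m c c)"
  have A0: "0 \<le> A" and B0: "0 \<le> B" unfolding A_def B_def using m_nonneg j c by auto
  have A2: "A^2 = 2 * sigma2 j" unfolding A_def using m_nonneg[OF j j] by (simp add: m_diag)
  have B2: "B^2 = 2 * sigma2 c" unfolding B_def using m_nonneg[OF c(1) c(1)] by (simp add: m_diag)
  have nu0: "0 \<le> nu2 j c" using nu_nonneg j c by auto
  have mjc: "m j c = (A^2 + B^2) / 2 + nu2 j c" unfolding m_def using c A2 B2 by auto
  have key: "((A + B) / 2)^2 = (A^2 + B^2) / 2 - (A - B)^2 / 4"
    by (simp add: power2_eq_square field_simps)
  have pos: "0 < (A - B)^2 / 4 + nu2 j c"
  proof (cases "0 < nu2 j c")
    case True then show ?thesis by (simp add: add_nonneg_pos)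
  next
    case False
    then have "sigma2 j \<noteq> sigma2 c" using h by auto
    then have "A \<noteq> B" using A2 B2 by auto
    then have q: "0 < (A - B)^2 / 4" by simp
    show ?thesis using q nu0 by linarith
  qed
  have "((A + B) / 2)^2 < m j c" unfolding mjc key using pos by linarith
  then have "(A + B) / 2 < sqrt (m j c)" by (rule real_less_rsqrt)
  then show ?thesis unfolding A_def B_def by simp
qed

lemma part_c:
  assumes h: "\<forall>j<J. \<forall>i<J. j \<noteq> i \<longrightarrow> nu2 j i > 0 \<or> sigma2 j \<noteq> sigma2 i" and j: "j < J"
  shows "(\<lambda>d. measure (TT d j) {xz \<in> space (TT d j). mch_assigns d J n (fst xz) (snd xz) j}) \<longlonglongrightarrow> 1"
proof -
  define g where "g c = sqrt (m j c) - sqrt (m j j) / 2 - sqrt (m c c) / 2" for c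
  have gp: "0 < g c / 4" if "c \<in> {..<J} - {j}" for c
  proof -
    have c: "c < J" "c \<noteq> j" using that by auto
    have "0 < nu2 j c \<or> sigma2 j \<noteq> sigma2 c" using h j c by auto
    then have "sqrt (m j j) / 2 + sqrt (m c c) / 2 < sqrt (m j c)" by (rule gpos[OF j c])
    then have "0 < sqrt (m j c) - sqrt (m j j) / 2 - sqrt (m c c) / 2" by linarith
    then show ?thesis unfolding g_def by simp
  qed
  obtain \<eta> where eta: "0 < \<eta>" and le: "\<forall>c\<in>{..<J} - {j}. \<eta> \<le> g c / 4"
    using exists_pos_lb[of "{..<J} - {j}" "\<lambda>c. g c / 4"] gp by auto
  define \<epsilon> where "\<epsilon> = \<eta>^2"
  have eps: "0 < \<epsilon>" unfolding \<epsilon>_def using eta by simp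
  have se: "sqrt \<epsilon> = \<eta>" unfolding \<epsilon>_def using eta by simp
  show ?thesis
  proof (rule conclude[OF j eps mch_meas[OF j]])
    show "eventually (\<lambda>d. good d j \<epsilon> \<subseteq> {xz \<in> space (TT d j). mch_assigns d J n (fst xz) (snd xz) j}) sequentially"
    proof (rule ev_good)
      fix d \<omega> assume d1: "1 \<le> d" and w: "\<omega> \<in> good d j \<epsilon>"
      have d: "0 < real d" using d1 by simp
      have sd: "0 < sqrt (real d)" using d by simp
      note HZ = good_memD(2)[OF w] and HW = good_memD(3)[OF w]
      have e0: "0 \<le> \<epsilon>" using eps by simp
      show "mch_assigns d J n (fst \<omega>) (snd \<omega>) j"
        unfolding mch_assigns_def
      proof (rule gen_ok[OF j sd, where a="\<lambda>c. sqrt (m j c)" and b="\<lambda>c. sqrt (m c c)" and \<eta>=\<eta>])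
        fix i assume "i < n j"
        then have p: "(j, i) \<in> I" by (rule mem_class[OF j])
        show "eucl_dist d (snd \<omega>) (fst \<omega> (j, i)) \<le> sqrt (real d) * (sqrt (m j j) + \<eta>)"
          unfolding eucl_dist_Dsq se[symmetric]
          using sqrt_est(2)[OF Dsq_nonneg d m_nonneg[OF j j] e0] HZ[OF p] by simp
      next
        fix c i assume c: "c < J" "c \<noteq> j" "i < n c"
        then have p: "(c, i) \<in> I" by (intro mem_class)
        show "sqrt (real d) * (sqrt (m j c) - \<eta>) \<le> eucl_dist d (snd \<omega>) (fst \<omega> (c, i))"
          unfolding eucl_dist_Dsq se[symmetric]
          using sqrt_est(1)[OF Dsq_nonneg d m_nonneg[OF j c(1)] e0] HZ[OF p] by simp
      next
        fix c t s assume c: "c < J" "t < n c" "s < t"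
        have h: "\<bar>Dsq d (fst \<omega> (c, s)) (fst \<omega> (c, t)) / real d - m c c\<bar> \<le> \<epsilon>"
          using HW c by auto
        show "sqrt (real d) * (sqrt (m c c) - \<eta>) \<le> eucl_dist d (fst \<omega> (c, s)) (fst \<omega> (c, t)) \<and>
              eucl_dist d (fst \<omega> (c, s)) (fst \<omega> (c, t)) \<le> sqrt (real d) * (sqrt (m c c) + \<eta>)"
          unfolding eucl_dist_Dsq se[symmetric]
          using sqrt_est[OF Dsq_nonneg d m_nonneg[OF c(1) c(1)] e0 h] by auto
      next
        fix c assume c: "c < J" "c \<noteq> j"
        have "\<eta> \<le> g c / 4" using le c by auto
        moreover have "0 < g c / 4" using gp c by auto
        ultimately show "sqrt (m j j) + \<eta> - (sqrt (m j j) - \<eta>) / 2 < sqrt (m j c) - \<eta> - (sqrt (m c c) + \<eta>) / 2"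
          unfolding g_def by (simp add: field_simps)
      qed
    qed
  qed
qed

end



theorem theorem1:
  fixes J :: nat and n :: "nat \<Rightarrow> nat" and k :: nat
    and F :: "nat \<Rightarrow> nat \<Rightarrow> (nat \<Rightarrow> real) measure"
    and sigma2 :: "nat \<Rightarrow> real" and nu2 :: "nat \<Rightarrow> nat \<Rightarrow> real"
  assumes J2: "J \<ge> 2"
    and n2: "\<And>j. j < J \<Longrightarrow> n j \<ge> 2"
    and prob: "\<And>d j. j < J \<Longrightarrow> prob_space (F d j)"
    and sets_F: "\<And>d j. j < J \<Longrightarrow> sets (F d j) = sets (vec_space d)"
    and A1: "\<exists>C. \<forall>d j r. j < J \<longrightarrow> r < d \<longrightarrow>
               integrable (F d j) (\<lambda>x. (x r)^4) \<and> (\<integral>x. (x r)^4 \<partial>(F d j)) \<le> C"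
    and A2: "\<And>j i. j < J \<Longrightarrow> i < J \<Longrightarrow>
               (\<lambda>d. (\<Sum>r<d. \<Sum>s\<in>{..<d} - {r}.
                    \<bar>corr_of (F d j \<Otimes>\<^sub>M F d i) (\<lambda>(x, y). (x r - y r)^2) (\<lambda>(x, y). (x s - y s)^2)\<bar>)
                  / (real d)^2) \<longlonglongrightarrow> 0"
    and A3_sigma: "\<And>j. j < J \<Longrightarrow> (\<lambda>d. trace_disp d (F d j) / real d) \<longlonglongrightarrow> sigma2 j"
    and A3_nu: "\<And>j i. j < J \<Longrightarrow> i < J \<Longrightarrow> j \<noteq> i \<Longrightarrow>
               (\<lambda>d. (\<Sum>r<d. (mean_vec (F d j) r - mean_vec (F d i) r)^2) / real d) \<longlonglongrightarrow> nu2 j i"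
  shows
    \<comment> \<open>(a), first part\<close>
    "(1 \<le> k \<and> (\<forall>j<J. k < n j) \<and>
       (\<forall>j<J. \<forall>i<J. j \<noteq> i \<longrightarrow> nu2 j i > \<bar>sigma2 j - sigma2 i\<bar>) \<longrightarrow>
       (\<forall>j<J. (\<lambda>d. measure (train_test J n (F d) j)
                {xz \<in> space (train_test J n (F d) j). knn_assigns d J n k (fst xz) (snd xz) j})
              \<longlonglongrightarrow> 1))
   \<and> \<comment> \<open>(a), second part\<close>
    (1 \<le> k \<and> (\<forall>j<J. k < n j) \<and>
       (\<exists>j<J. \<exists>i<J. j \<noteq> i \<and> nu2 j i < \<bar>sigma2 j - sigma2 i\<bar>) \<longrightarrow>
       (\<exists>j<J. (\<lambda>d. measure (train_test J n (F d) j)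
                {xz \<in> space (train_test J n (F d) j). \<not> knn_may_assign d J n k (fst xz) (snd xz) j})
              \<longlonglongrightarrow> 1))
   \<and> \<comment> \<open>(b)\<close>
    ((\<forall>j<J. \<forall>i<J. j \<noteq> i \<longrightarrow> nu2 j i > 0) \<longrightarrow>
       (\<forall>j<J. (\<lambda>d. measure (train_test J n (F d) j)
                {xz \<in> space (train_test J n (F d) j). ch_assigns d J n (fst xz) (snd xz) j})
              \<longlonglongrightarrow> 1))
   \<and> \<comment> \<open>(c)\<close>
    ((\<forall>j<J. \<forall>i<J. j \<noteq> i \<longrightarrow> nu2 j i > 0 \<or> sigma2 j \<noteq> sigma2 i) \<longrightarrow>
       (\<forall>j<J. (\<lambda>d. measure (train_test J n (F d) j)
                {xz \<in> space (train_test J n (F d) j). mch_assigns d J n (fst xz) (snd xz) j})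
              \<longlonglongrightarrow> 1))"
  proof -
  interpret S: setting J n F sigma2 nu2
    by (rule setting.intro) (fact J2 n2 prob sets_F A1 A2 A3_sigma A3_nu)+
  show ?thesis
    apply (intro conjI impI)
       apply (elim conjE, intro allI impI, rule S.part_a1; assumption)
      apply (elim conjE, rule S.part_a2; assumption)
     apply (intro allI impI, rule S.part_b; assumption)
    apply (intro allI impI, rule S.part_c; assumption)
    done
qed

end
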